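(* Let $n\ge2$ and let $X_1,\dots,X_n$ be nonnegative (possibly dependent) random variables with order statistics $X_{1:n}\le\cdots\le X_{n:n}$, and suppose one of the following holds: (A) the distribution function of $X_{n:n}$ has infinite upper endpoint, $X_{n:n}\in\mathrm{GMDA}(h)$ for some positive $h$, and $$\lim_{x\to\infty}\frac{\mathbb{P}(|X_i|>t h(x),X_j>x)}{\mathbb{P}(X_{n:n}>x)}=0\ \text{for all }1\le i\ne j\le n,\ t>0,\qquad(\ast)$$ $$\lim_{x\to\infty}\frac{\mathbb{P}(X_i>Lh(x),X_j>Lh(x))}{\mathbb{P}(X_{n:n}>x)}=0\ \text{for all }1\le i<j\le n\text{ and some }L>0;\qquad(\ast\ast)$$ (B) $X_{n:n}\in\mathcal{L}$ and there exists $h\in\mathcal{H}_{X_{n:n}}$ such that $(\ast)$ and $(\ast\ast)$ hold; (C) $X_{n:n}\in\mathcal{L}\cap\mathcal{D}$ and there exists a dominatedly varying $h\in\mathcal{H}_{X_{n:n}}$ such that $(\ast)$ holds. Then for any $0<a\le b<\infty$ and $0\le d<\infty$, $$\mathbb{P}\Big(\sum_{i=0}^{n-1}c_iX_{n-i:n}>x\Big)\sim\mathbb{P}(c_0X_{n:n}>x)\sim\sum_{i=1}^n\mathbb{P}(c_0X_i>x),\qquad x\to\infty,$$ uniformly for $(c_0,c_1,\dots,c_{n-1})\in[a,b]\times[-d,d]^{n-1}$.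
   Context: Random variables are assumed not degenerate at $0$ (not concentrated on $(-\infty,0]$). For a distribution function $F$, $\overline{F}=1-F$, $x_F=\sup\{x:F(x)<1\}$. $F\in\mathrm{GMDA}(h)$ means $\lim_{x\to x_F}\overline{F}(x+yh(x))/\overline{F}(x)=e^{-y}$ for all $y\in\mathbb{R}$. $F\in\mathcal{L}$ means $\overline{F}(x)>0$ for all $x\ge0$ and $\overline{F}(x+y)\sim\overline{F}(x)$ for all $y\in\mathbb{R}$. $F\in\mathcal{D}$ means $\overline{F}$ is dominatedly varying; a positive $g$ is dominatedly varying if $0<\liminf g(xy)/g(x)\le\limsup g(xy)/g(x)<\infty$ as $x\to\infty$ for every $y>0$. For $F\in\mathcal{L}$, $\mathcal{H}_F$ is the set of eventually positive $h$ with $h(x)=o(x)$, $\overline{F}(x+yh(x))\sim\overline{F}(x)$ for all $y\in\mathbb{R}$, and $\limsup_{x\to\infty}h(x+yh(x))/h(x)<\infty$ for all $y\in\mathbb{R}$. "Uniformly" means the suprema over the parameter set of the deviations of the ratios from $1$ tend to $0$. *)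

theory Defs
  imports "HOL-Probability.Probability"
begin

definition ordstat :: "nat \<Rightarrow> (nat \<Rightarrow> 'a \<Rightarrow> real) \<Rightarrow> nat \<Rightarrow> 'a \<Rightarrow> real" where
  "ordstat n X k \<omega> = sort (map (\<lambda>i. X i \<omega>) [1..<Suc n]) ! (k - 1)"

definition distF :: "'a measure \<Rightarrow> ('a \<Rightarrow> real) \<Rightarrow> real \<Rightarrow> real" where
  "distF M Y x = measure M {\<omega> \<in> space M. Y \<omega> \<le> x}"

definition upper_endpoint :: "(real \<Rightarrow> real) \<Rightarrow> ereal" where
  "upper_endpoint F = Sup (ereal ` {x. F x < 1})"

definition gmda :: "(real \<Rightarrow> real) \<Rightarrow> (real \<Rightarrow> real) \<Rightarrow> bool" where
  "gmda F h \<longleftrightarrow> (\<forall>y. ((\<lambda>x. (1 - F (x + y * h x)) / (1 - F x)) \<longlongrightarrow> exp (- y))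
      (if upper_endpoint F = \<infinity> then at_top else at_left (real_of_ereal (upper_endpoint F))))"

definition longtailed :: "(real \<Rightarrow> real) \<Rightarrow> bool" where
  "longtailed F \<longleftrightarrow> (\<forall>x\<ge>0. 1 - F x > 0) \<and>
     (\<forall>y. ((\<lambda>x. (1 - F (x + y)) / (1 - F x)) \<longlongrightarrow> 1) at_top)"

definition domvar :: "(real \<Rightarrow> real) \<Rightarrow> bool" where
  "domvar g \<longleftrightarrow> eventually (\<lambda>x. g x > 0) at_top \<and>
     (\<forall>y>0. 0 < Liminf at_top (\<lambda>x. ereal (g (x * y) / g x)) \<and>
            Limsup at_top (\<lambda>x. ereal (g (x * y) / g x)) < \<infinity>)"

definition domvar_dist :: "(real \<Rightarrow> real) \<Rightarrow> bool" where
  "domvar_dist F \<longleftrightarrow> domvar (\<lambda>x. 1 - F x)"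

definition Hclass :: "(real \<Rightarrow> real) \<Rightarrow> (real \<Rightarrow> real) set" where
  "Hclass F = {h. eventually (\<lambda>x. h x > 0) at_top \<and>
      ((\<lambda>x. h x / x) \<longlongrightarrow> 0) at_top \<and>
      (\<forall>y. ((\<lambda>x. (1 - F (x + y * h x)) / (1 - F x)) \<longlongrightarrow> 1) at_top) \<and>
      (\<forall>y. Limsup at_top (\<lambda>x. ereal (h (x + y * h x) / h x)) < \<infinity>)}"

definition cond_star :: "'a measure \<Rightarrow> nat \<Rightarrow> (nat \<Rightarrow> 'a \<Rightarrow> real) \<Rightarrow> (real \<Rightarrow> real) \<Rightarrow> bool" where
  "cond_star M n X h \<longleftrightarrow> (\<forall>i\<in>{1..n}. \<forall>j\<in>{1..n}. i \<noteq> j \<longrightarrow> (\<forall>t>0.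
     ((\<lambda>x. measure M {\<omega> \<in> space M. \<bar>X i \<omega>\<bar> > t * h x \<and> X j \<omega> > x}
          / measure M {\<omega> \<in> space M. ordstat n X n \<omega> > x}) \<longlongrightarrow> 0) at_top))"

definition cond_starstar :: "'a measure \<Rightarrow> nat \<Rightarrow> (nat \<Rightarrow> 'a \<Rightarrow> real) \<Rightarrow> (real \<Rightarrow> real) \<Rightarrow> bool" where
  "cond_starstar M n X h \<longleftrightarrow> (\<exists>L>0. \<forall>i\<in>{1..n}. \<forall>j\<in>{1..n}. i < j \<longrightarrow>
     ((\<lambda>x. measure M {\<omega> \<in> space M. X i \<omega> > L * h x \<and> X j \<omega> > L * h x}
          / measure M {\<omega> \<in> space M. ordstat n X n \<omega> > x}) \<longlongrightarrow> 0) at_top)"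

end

theory Submission
  imports Defs
begin
lemma sorted_gt_count:
  fixes ys :: "real list"
  assumes "sorted ys" "length ys = n" "1 \<le> k" "k \<le> n"
  shows "ys ! (k-1) > x \<longleftrightarrow> n - k + 1 \<le> length (filter (\<lambda>v. v > x) ys)"
proof -
  have L: "length (filter (\<lambda>v. v > x) ys) = card {j. j < n \<and> ys ! j > x}"
    using assms(2) by (simp add: length_filter_conv_card)
  show ?thesis
  proof
    assume g: "ys ! (k-1) > x"
    have "{k-1..<n} \<subseteq> {j. j < n \<and> ys ! j > x}"
    proof
      fix j assume "j \<in> {k-1..<n}"
      then have "ys ! (k-1) \<le> ys ! j" using sorted_nth_mono[OF assms(1)] assms by auto
      then show "j \<in> {j. j < n \<and> ys ! j > x}" using g \<open>j \<in> {k-1..<n}\<close> by auto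
    qed
    then have "card {k-1..<n} \<le> card {j. j < n \<and> ys ! j > x}" by (intro card_mono) auto
    then show "n - k + 1 \<le> length (filter (\<lambda>v. v > x) ys)" using L assms by simp
  next
    assume c: "n - k + 1 \<le> length (filter (\<lambda>v. v > x) ys)"
    show "ys ! (k-1) > x"
    proof (rule ccontr)
      assume "\<not> ys ! (k-1) > x"
      then have "{j. j < n \<and> ys ! j > x} \<subseteq> {k..<n}"
      proof (intro subsetI)
        fix j assume nx: "\<not> ys ! (k-1) > x" and j: "j \<in> {j. j < n \<and> ys ! j > x}"
        have "k \<le> j"
        proof (rule ccontr)
          assume "\<not> k \<le> j"
          then have "ys ! j \<le> ys ! (k-1)" using sorted_nth_mono[OF assms(1), of j "k-1"] assms by simp
          then show False using nx j by simp
        qed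
        then show "j \<in> {k..<n}" using j by simp
      qed
      then have "card {j. j < n \<and> ys ! j > x} \<le> card {k..<n}" by (intro card_mono) auto
      then show False using c L assms by simp
    qed
  qed
qed

lemma ordstat_gt:
  assumes "1 \<le> k" "k \<le> n"
  shows "ordstat n X k w > x \<longleftrightarrow> n - k + 1 \<le> card {i\<in>{1..n}. X i w > x}"
proof -
  let ?xs = "map (\<lambda>i. X i w) [1..<Suc n]"
  have "length (filter (\<lambda>v. v > x) (sort ?xs)) = length (filter (\<lambda>v. v > x) ?xs)"
    by (metis mset_filter mset_sort size_mset)
  also have "\<dots> = length (filter (\<lambda>i. X i w > x) [1..<Suc n])"
    by (simp add: filter_map comp_def)
  also have "\<dots> = card {i\<in>{1..n}. X i w > x}"
    by (subst distinct_length_filter) (auto intro: arg_cong[where f=card])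
  finally have e: "length (filter (\<lambda>v. v > x) (sort ?xs)) = card {i\<in>{1..n}. X i w > x}" .
  show ?thesis unfolding ordstat_def
    using sorted_gt_count[of "sort ?xs" n k x] assms e by simp
qed

lemma L_lower: "A \<le> P + Q \<Longrightarrow> (1-e/2)*F \<le> A \<Longrightarrow> Q \<le> e/2 * F \<Longrightarrow> (1-e)*F \<le> (P::real)"
  by (simp add: algebra_simps)
lemma L_upper: "P \<le> A + Q \<Longrightarrow> A \<le> (1+e/2)*F \<Longrightarrow> Q \<le> e/2*F \<Longrightarrow> P \<le> (1+e)*(F::real)"
  by (simp add: algebra_simps)
lemma L_sum: "A \<le> P + Q \<Longrightarrow> P \<le> e/2*F \<Longrightarrow> Q \<le> e/2*F \<Longrightarrow> A \<le> e*(F::real)"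
  by (simp add: algebra_simps)
lemma L_each: "a \<le> u \<Longrightarrow> u \<le> b + v \<Longrightarrow> v \<le> c \<Longrightarrow> a \<le> b + (c::real)"
  by simp
lemma L_p2: "S \<le> B + P \<Longrightarrow> B \<le> F \<Longrightarrow> P \<le> e*F \<Longrightarrow> S \<le> (1+e)*(F::real)"
  by (simp add: algebra_simps)
lemma L_contra: "m < a \<Longrightarrow> b < (m::real) \<Longrightarrow> a \<le> b \<Longrightarrow> False"
  by simp

lemma card_ge_sets:
  fixes M :: "'a measure" and n :: nat and X :: "nat \<Rightarrow> 'a \<Rightarrow> real"
  assumes meas: "\<forall>i\<in>{1..n}. X i \<in> borel_measurable M" and r: "1 \<le> r"
  shows "{w\<in>space M. r \<le> card {i\<in>{1..n}. a < X i w}} \<in> sets M"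
proof -
  let ?I = "{S. S \<subseteq> {1..(n::nat)} \<and> r \<le> card S}"
  have eq: "{w\<in>space M. r \<le> card {i\<in>{1..n}. a < X i w}} =
      (\<Union>S\<in>?I. (\<Inter>i\<in>S. {w\<in>space M. a < X i w}))"
  proof (intro equalityI subsetI)
    fix w assume w: "w \<in> {w\<in>space M. r \<le> card {i\<in>{1..n}. a < X i w}}"
    then have "{i\<in>{1..n}. a < X i w} \<in> ?I" by auto
    moreover have "w \<in> (\<Inter>i\<in>{i\<in>{1..n}. a < X i w}. {w\<in>space M. a < X i w})"
      using w r by auto
    ultimately show "w \<in> (\<Union>S\<in>?I. (\<Inter>i\<in>S. {w\<in>space M. a < X i w}))" by blast
  next
    fix w assume "w \<in> (\<Union>S\<in>?I. (\<Inter>i\<in>S. {w\<in>space M. a < X i w}))"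
    then obtain S where S: "S \<subseteq> {1..n}" "r \<le> card S" and wS: "\<forall>i\<in>S. w \<in> space M \<and> a < X i w"
      by blast
    have "S \<noteq> {}" using S r by auto
    then have "w \<in> space M" using wS by auto
    moreover have "card S \<le> card {i\<in>{1..n}. a < X i w}"
      using S wS by (intro card_mono) auto
    ultimately show "w \<in> {w\<in>space M. r \<le> card {i\<in>{1..n}. a < X i w}}" using S by auto
  qed
  have fin: "finite ?I" by (rule finite_subset[of _ "Pow {1..n}"]) auto
  show ?thesis unfolding eq
  proof (rule sets.finite_UN[OF fin])
    fix S assume S: "S \<in> ?I"
    then have "S \<noteq> {}" "finite S" using r finite_subset[of S "{1..n}"] by auto
    moreover have "\<And>i. i \<in> S \<Longrightarrow> {w\<in>space M. a < X i w} \<in> sets M"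
      using S meas borel_measurable_iff_greater by blast
    ultimately show "(\<Inter>i\<in>S. {w\<in>space M. a < X i w}) \<in> sets M"
      by (intro sets.finite_INT) auto
  qed
qed

locale os = prob_space M for M :: "'a measure" +
  fixes X :: "nat \<Rightarrow> 'a \<Rightarrow> real" and n :: nat
  assumes n2: "n \<ge> 2" and meas: "\<forall>i\<in>{1..n}. X i \<in> borel_measurable M"
    and nonneg: "\<forall>i\<in>{1..n}. \<forall>\<omega>\<in>space M. X i \<omega> \<ge> 0"
begin

abbreviation "Mx \<equiv> ordstat n X n"
definition mx :: "'a \<Rightarrow> real" where "mx = ordstat n X (n-1)"
abbreviation pr :: "('a \<Rightarrow> bool) \<Rightarrow> real" where "pr Q \<equiv> measure M {w\<in>space M. Q w}"
abbreviation "Fb y \<equiv> pr (\<lambda>w. Mx w > y)"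
abbreviation "Pairs \<equiv> SIGMA i:{1..n}. {1..n} - {i}"

lemma os_meas: "1 \<le> k \<Longrightarrow> k \<le> n \<Longrightarrow> ordstat n X k \<in> borel_measurable M"
  unfolding borel_measurable_iff_greater ordstat_gt
  by (intro allI card_ge_sets[OF meas]) simp

lemma Mx_meas[measurable]: "Mx \<in> borel_measurable M"
  using os_meas n2 by simp
lemma mx_meas[measurable]: "mx \<in> borel_measurable M"
  unfolding mx_def using os_meas n2 by simp

lemma os_mono:
  assumes "1 \<le> k" "k \<le> k'" "k' \<le> n"
  shows "ordstat n X k w \<le> ordstat n X k' w"
proof (rule ccontr)
  assume "\<not> ?thesis"
  then have "ordstat n X k w > ordstat n X k' w" by simp
  then have "n - k + 1 \<le> card {i\<in>{1..n}. ordstat n X k' w < X i w}"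
    using ordstat_gt[where k=k and n=n and X=X and w=w and x="ordstat n X k' w"] assms by simp
  then have "n - k' + 1 \<le> card {i\<in>{1..n}. ordstat n X k' w < X i w}" using assms by linarith
  then have "ordstat n X k' w > ordstat n X k' w"
    using ordstat_gt[where k=k' and n=n and X=X and w=w and x="ordstat n X k' w"] assms by simp
  then show False by simp
qed

lemma os_nonneg:
  assumes "w \<in> space M" "1 \<le> k" "k \<le> n"
  shows "ordstat n X k w \<ge> 0"
proof (rule ccontr)
  assume "\<not> ?thesis"
  then have neg: "ordstat n X k w < 0" by simp
  have "{i\<in>{1..n}. ordstat n X k w < X i w} = {1..n}"
    using nonneg assms(1) neg by force
  then have "n - k + 1 \<le> card {i\<in>{1..n}. ordstat n X k w < X i w}" using assms by simp
  then have "ordstat n X k w > ordstat n X k w"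
    using ordstat_gt[where k=k and n=n and X=X and w=w and x="ordstat n X k w"] assms by simp
  then show False by simp
qed

lemma mx_nonneg: "w \<in> space M \<Longrightarrow> mx w \<ge> 0"
  unfolding mx_def using os_nonneg n2 by simp
lemma mx_le_Mx: "mx w \<le> Mx w"
  unfolding mx_def using os_mono[where k="n-1" and k'=n] n2 by simp

lemma Mx_gt: "Mx w > y \<longleftrightarrow> (\<exists>i\<in>{1..n}. X i w > y)"
proof -
  have a: "1 \<le> n" "n \<le> n" using n2 by auto
  have b: "n - n + 1 = 1" by simp
  have e1: "Mx w > y \<longleftrightarrow> 1 \<le> card {i\<in>{1..n}. X i w > y}"
    using ordstat_gt[OF a, where X=X and w=w and x=y] unfolding b .
  have fin: "finite {i\<in>{1..n}. X i w > y}" by simp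
  have e2: "1 \<le> card {i\<in>{1..n}. X i w > y} \<longleftrightarrow> {i\<in>{1..n}. X i w > y} \<noteq> {}"
    using card_gt_0_iff[of "{i\<in>{1..n}. X i w > y}"] fin by linarith
  show ?thesis unfolding e1 e2 by blast
qed

lemma mx_gt: "mx w > s \<longleftrightarrow> 2 \<le> card {i\<in>{1..n}. X i w > s}"
proof -
  have a: "1 \<le> n-1" "n-1 \<le> n" and b: "n - (n-1) + 1 = 2" using n2 by auto
  show ?thesis using ordstat_gt[OF a, where X=X and w=w and x=s] unfolding b mx_def .
qed

lemma card2_other:
  assumes "2 \<le> card A" "finite A"
  shows "\<exists>i\<in>A. i \<noteq> j"
proof (rule ccontr)
  assume "\<not> ?thesis"
  then have "A \<subseteq> {j}" by auto
  then have "card A \<le> 1" using card_mono[of "{j}" A] by simp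
  then show False using assms by simp
qed

lemma pair_incl:
  assumes "mx w > s" "Mx w > y"
  shows "\<exists>p\<in>Pairs. X (fst p) w > s \<and> X (snd p) w > y"
proof -
  obtain j where j: "j \<in> {1..n}" "X j w > y" using assms(2) Mx_gt by auto
  have "2 \<le> card {i\<in>{1..n}. X i w > s}" using assms(1) mx_gt by simp
  then obtain i where "i \<in> {i\<in>{1..n}. X i w > s}" "i \<noteq> j"
    using card2_other[of "{i\<in>{1..n}. X i w > s}" j] by auto
  then show ?thesis using j by (intro bexI[of _ "(i,j)"]) auto
qed

lemma pair_incl2:
  assumes "mx w > s"
  shows "\<exists>p\<in>{p\<in>{1..n}\<times>{1..n}. fst p < snd p}. X (fst p) w > s \<and> X (snd p) w > s"
proof -
  have c: "2 \<le> card {i\<in>{1..n}. X i w > s}" using assms mx_gt by simp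
  then obtain j where j: "j \<in> {i\<in>{1..n}. X i w > s}"
    by (metis (no_types, lifting) card.empty equals0I not_numeral_le_zero)
  obtain i where i: "i \<in> {i\<in>{1..n}. X i w > s}" "i \<noteq> j"
    using card2_other[of "{i\<in>{1..n}. X i w > s}" j] c by auto
  show ?thesis
  proof (cases "i < j")
    case True then show ?thesis using i j by (intro bexI[of _ "(i,j)"]) auto
  next
    case False then have "j < i" using i by simp
    then show ?thesis using i j by (intro bexI[of _ "(j,i)"]) auto
  qed
qed

lemma Xm[measurable]: "i \<in> {1..n} \<Longrightarrow> X i \<in> borel_measurable M"
  using meas by auto

lemma sets_Xi: "i \<in> {1..n} \<Longrightarrow> j \<in> {1..n} \<Longrightarrow> {w\<in>space M. \<bar>X i w\<bar> > s \<and> X j w > y} \<in> sets M"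
  by measurable
lemma sets_Xi2: "i \<in> {1..n} \<Longrightarrow> j \<in> {1..n} \<Longrightarrow> {w\<in>space M. X i w > s \<and> X j w > y} \<in> sets M"
  by measurable
lemma sets_X1: "i \<in> {1..n} \<Longrightarrow> {w\<in>space M. X i w > y} \<in> sets M"
  by measurable

lemma sub2: "A \<in> sets M \<Longrightarrow> B \<in> sets M \<Longrightarrow> measure M (A \<union> B) \<le> measure M A + measure M B"
  by (rule measure_subadditive) auto

lemma pair_bound:
  "pr (\<lambda>w. mx w > s \<and> Mx w > y) \<le> (\<Sum>p\<in>Pairs. pr (\<lambda>w. \<bar>X (fst p) w\<bar> > s \<and> X (snd p) w > y))"
proof -
  let ?A = "\<lambda>p. {w\<in>space M. \<bar>X (fst p) w\<bar> > s \<and> X (snd p) w > y}"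
  have sub: "{w\<in>space M. mx w > s \<and> Mx w > y} \<subseteq> (\<Union>p\<in>Pairs. ?A p)"
  proof (intro subsetI)
    fix w assume w: "w \<in> {w\<in>space M. mx w > s \<and> Mx w > y}"
    then obtain p where p: "p \<in> Pairs" "X (fst p) w > s" "X (snd p) w > y" using pair_incl by blast
    have "\<bar>X (fst p) w\<bar> > s" by (rule less_le_trans[OF p(2) abs_ge_self])
    then have "w \<in> ?A p" using w p by blast
    then show "w \<in> (\<Union>p\<in>Pairs. ?A p)" using p(1) by blast
  qed
  have img: "?A ` Pairs \<subseteq> sets M"
  proof (intro subsetI)
    fix S assume "S \<in> ?A ` Pairs"
    then obtain p where p: "p \<in> Pairs" "S = ?A p" by blast
    have "fst p \<in> {1..n}" "snd p \<in> {1..n}" using p(1) by (auto simp: mem_Sigma_iff)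
    then show "S \<in> sets M" using p(2) sets_Xi by blast
  qed
  have fin: "finite Pairs" by (intro finite_SigmaI) auto
  have U: "(\<Union>p\<in>Pairs. ?A p) \<in> sets M" using img fin by (intro sets.finite_UN) auto
  have a1: "measure M {w\<in>space M. mx w > s \<and> Mx w > y} \<le> measure M (\<Union>p\<in>Pairs. ?A p)"
    by (rule finite_measure_mono[OF sub U])
  have a2: "measure M (\<Union>p\<in>Pairs. ?A p) \<le> (\<Sum>p\<in>Pairs. measure M (?A p))"
    by (rule finite_measure_subadditive_finite[OF fin img])
  show ?thesis by (rule order_trans[OF a1 a2])
qed

lemma pair_bound2:
  "pr (\<lambda>w. mx w > s) \<le> (\<Sum>p\<in>{p\<in>{1..n}\<times>{1..n}. fst p < snd p}. pr (\<lambda>w. X (fst p) w > s \<and> X (snd p) w > s))"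
proof -
  let ?P = "{p\<in>{1..n}\<times>{1..n}. fst p < snd p}"
  let ?A = "\<lambda>p. {w\<in>space M. X (fst p) w > s \<and> X (snd p) w > s}"
  have fin: "finite ?P" by (rule finite_subset[of _ "{1..n}\<times>{1..n}"]) auto
  have sub: "{w\<in>space M. mx w > s} \<subseteq> (\<Union>p\<in>?P. ?A p)"
  proof (intro subsetI)
    fix w assume w: "w \<in> {w\<in>space M. mx w > s}"
    then obtain p where p: "p \<in> ?P" "X (fst p) w > s" "X (snd p) w > s" using pair_incl2 by blast
    then have "w \<in> ?A p" using w by blast
    then show "w \<in> (\<Union>p\<in>?P. ?A p)" using p(1) by blast
  qed
  have img: "?A ` ?P \<subseteq> sets M"
  proof (intro subsetI)
    fix S assume "S \<in> ?A ` ?P"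
    then obtain p where p: "p \<in> ?P" "S = ?A p" by blast
    have "fst p \<in> {1..n}" "snd p \<in> {1..n}" using p(1) by auto
    then show "S \<in> sets M" using p(2) sets_Xi2 by blast
  qed
  have U: "(\<Union>p\<in>?P. ?A p) \<in> sets M" using img fin by (intro sets.finite_UN) auto
  have a1: "measure M {w\<in>space M. mx w > s} \<le> measure M (\<Union>p\<in>?P. ?A p)"
    by (rule finite_measure_mono[OF sub U])
  have a2: "measure M (\<Union>p\<in>?P. ?A p) \<le> (\<Sum>p\<in>?P. measure M (?A p))"
    by (rule finite_measure_subadditive_finite[OF fin img])
  show ?thesis by (rule order_trans[OF a1 a2])
qed

lemma Fb_mono: "s \<le> t \<Longrightarrow> Fb t \<le> Fb s"
  by (rule finite_measure_mono) auto

lemma Fb_nonneg: "Fb y \<ge> 0" by simp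

lemma Fb_eq: "1 - distF M Mx x = Fb x"
proof -
  have "{w\<in>space M. Mx w > x} = space M - {w\<in>space M. Mx w \<le> x}" by auto
  then have "Fb x = 1 - measure M {w\<in>space M. Mx w \<le> x}"
    by (simp add: prob_compl)
  then show ?thesis unfolding distF_def by simp
qed

lemma Fb_eq_fun: "(\<lambda>x. 1 - distF M Mx x) = Fb"
  using Fb_eq by auto

end

context os begin


end

context os begin
lemma sets_mxMx[measurable]: "{w\<in>space M. s < mx w \<and> y < Mx w} \<in> sets M" by measurable

end

context os begin
lemma star_ev:
  assumes star: "cond_star M n X h" and pos: "eventually (\<lambda>y. Fb y > 0) at_top"
    and t: "t > 0" and e: "\<epsilon> > 0"
  shows "eventually (\<lambda>y. (\<Sum>p\<in>Pairs. pr (\<lambda>w. \<bar>X (fst p) w\<bar> > t * h y \<and> X (snd p) w > y)) \<le> \<epsilon> * Fb y) at_top"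
proof -
  define N where "N = real (card Pairs) + 1"
  have N: "N > 0" using of_nat_0_le_iff[of "card Pairs"] unfolding N_def by linarith
  have fin: "finite Pairs" by auto
  have "\<forall>p\<in>Pairs. eventually (\<lambda>y. pr (\<lambda>w. \<bar>X (fst p) w\<bar> > t * h y \<and> X (snd p) w > y) / Fb y < \<epsilon> / N) at_top"
  proof
    fix p assume p: "p \<in> Pairs"
    obtain i j where ij: "p = (i, j)" by (cases p)
    have "i \<in> {1..n}" "j \<in> {1..n}" "i \<noteq> j" using p ij by auto
    then have "((\<lambda>y. pr (\<lambda>w. \<bar>X i w\<bar> > t * h y \<and> X j w > y) / Fb y) \<longlongrightarrow> 0) at_top"
      using star t unfolding cond_star_def by blast
    then show "eventually (\<lambda>y. pr (\<lambda>w. \<bar>X (fst p) w\<bar> > t * h y \<and> X (snd p) w > y) / Fb y < \<epsilon> / N) at_top"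
      using e N ij by (auto intro: order_tendstoD(2))
  qed
  then have ev: "eventually (\<lambda>y. \<forall>p\<in>Pairs. pr (\<lambda>w. \<bar>X (fst p) w\<bar> > t * h y \<and> X (snd p) w > y) / Fb y < \<epsilon> / N) at_top"
    by (rule eventually_ball_finite[OF fin])
  show ?thesis using ev pos
  proof eventually_elim
    case (elim y)
    have "(\<Sum>p\<in>Pairs. pr (\<lambda>w. \<bar>X (fst p) w\<bar> > t * h y \<and> X (snd p) w > y)) \<le> (\<Sum>p\<in>Pairs. \<epsilon> / N * Fb y)"
    proof (rule sum_mono)
      fix p assume p: "p \<in> Pairs"
      have "pr (\<lambda>w. \<bar>X (fst p) w\<bar> > t * h y \<and> X (snd p) w > y) / Fb y < \<epsilon> / N" using elim(1) p by blast
      then have "pr (\<lambda>w. \<bar>X (fst p) w\<bar> > t * h y \<and> X (snd p) w > y) < \<epsilon> / N * Fb y"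
        by (simp only: pos_divide_less_eq[OF elim(2)])
      then show "pr (\<lambda>w. \<bar>X (fst p) w\<bar> > t * h y \<and> X (snd p) w > y) \<le> \<epsilon> / N * Fb y" by (rule less_imp_le)
    qed
    also have "\<dots> = (real (card Pairs) * (\<epsilon> / N)) * Fb y" by simp
    also have "\<dots> \<le> \<epsilon> * Fb y"
    proof (rule mult_right_mono)
      show "real (card Pairs) * (\<epsilon> / N) \<le> \<epsilon>" using N e by (simp add: N_def field_simps)
    qed simp
    finally show ?case .
  qed
qed

end

context os begin
lemma star_pair:
  assumes star: "cond_star M n X h" and pos: "eventually (\<lambda>y. Fb y > 0) at_top"
    and t: "t > 0" and e: "\<epsilon> > 0"
  shows "eventually (\<lambda>y. pr (\<lambda>w. mx w > t * h y \<and> Mx w > y) \<le> \<epsilon> * Fb y) at_top"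
  using star_ev[OF assms] by eventually_elim (rule order_trans[OF pair_bound])

end

context os begin
lemma third:
  assumes star: "cond_star M n X h" and pos: "eventually (\<lambda>y. Fb y > 0) at_top"
    and fl: "filterlim z at_top at_top" and K: "K > 0" and hK: "eventually (\<lambda>y. h (z y) \<le> K * h y) at_top"
    and C: "C \<ge> 0" and FC: "eventually (\<lambda>y. Fb (z y) \<le> C * Fb y) at_top"
    and t: "t > 0" and e: "\<epsilon> > 0"
  shows "eventually (\<lambda>y. pr (\<lambda>w. mx w > t * h y \<and> Mx w > z y) \<le> \<epsilon> * Fb y) at_top"
proof -
  have "eventually (\<lambda>v. pr (\<lambda>w. mx w > (t/K) * h v \<and> Mx w > v) \<le> \<epsilon>/(C+1) * Fb v) at_top"
    by (rule star_pair[OF star pos]) (use t K e C in auto)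
  then have ev: "eventually (\<lambda>y. pr (\<lambda>w. mx w > (t/K) * h (z y) \<and> Mx w > z y) \<le> \<epsilon>/(C+1) * Fb (z y)) at_top"
    by (rule eventually_compose_filterlim) (rule fl)
  show ?thesis using ev hK FC
  proof eventually_elim
    case (elim y)
    have "(t/K) * h (z y) \<le> (t/K) * (K * h y)" using elim(2) t K by (intro mult_left_mono) auto
    also have "\<dots> = t * h y" using K by simp
    finally have le: "(t/K) * h (z y) \<le> t * h y" .
    have "pr (\<lambda>w. mx w > t * h y \<and> Mx w > z y) \<le> pr (\<lambda>w. mx w > (t/K) * h (z y) \<and> Mx w > z y)"
    proof (rule finite_measure_mono)
      show "{w \<in> space M. t * h y < mx w \<and> z y < Mx w} \<subseteq> {w \<in> space M. t / K * h (z y) < mx w \<and> z y < Mx w}"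
        using le by auto
    qed (rule sets_mxMx)
    also have "\<dots> \<le> \<epsilon>/(C+1) * Fb (z y)" by (rule elim(1))
    also have "\<dots> \<le> \<epsilon>/(C+1) * (C * Fb y)" using elim(3) e C by (intro mult_left_mono) auto
    also have "\<dots> = (\<epsilon> * (C/(C+1))) * Fb y" by simp
    also have "\<dots> \<le> \<epsilon> * Fb y"
    proof (rule mult_right_mono)
      have "C/(C+1) \<le> 1" using C by simp
      then have "\<epsilon> * (C/(C+1)) \<le> \<epsilon> * 1" using e by (intro mult_left_mono) auto
      then show "\<epsilon> * (C/(C+1)) \<le> \<epsilon>" by simp
    qed simp
    finally show ?case .
  qed
qed

end

context os begin
lemma starstar_ev:
  assumes ss: "cond_starstar M n X h" and pos: "eventually (\<lambda>y. Fb y > 0) at_top"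
  shows "\<exists>L>0. \<forall>\<epsilon>>0. eventually (\<lambda>y. pr (\<lambda>w. mx w > L * h y) \<le> \<epsilon> * Fb y) at_top"
proof -
  let ?P = "{p\<in>{1..n}\<times>{1..n}. fst p < snd p}"
  obtain L where L: "L > 0" and LL: "\<forall>i\<in>{1..n}. \<forall>j\<in>{1..n}. i < j \<longrightarrow>
     ((\<lambda>x. pr (\<lambda>w. X i w > L * h x \<and> X j w > L * h x) / Fb x) \<longlongrightarrow> 0) at_top"
    using ss unfolding cond_starstar_def by blast
  have fin: "finite ?P" by (rule finite_subset[of _ "{1..n}\<times>{1..n}"]) auto
  show ?thesis
  proof (intro exI[of _ L] conjI allI impI L)
    fix \<epsilon> :: real assume e: "\<epsilon> > 0"
    define N where "N = real (card ?P) + 1"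
    have N: "N > 0" unfolding N_def by simp
    have "\<forall>p\<in>?P. eventually (\<lambda>y. pr (\<lambda>w. X (fst p) w > L * h y \<and> X (snd p) w > L * h y) / Fb y < \<epsilon> / N) at_top"
    proof
      fix p assume p: "p \<in> ?P"
      obtain i j where ij: "p = (i, j)" by (cases p)
      have "i \<in> {1..n}" "j \<in> {1..n}" "i < j" using p ij by auto
      then have "((\<lambda>y. pr (\<lambda>w. X i w > L * h y \<and> X j w > L * h y) / Fb y) \<longlongrightarrow> 0) at_top"
        using LL by blast
      then show "eventually (\<lambda>y. pr (\<lambda>w. X (fst p) w > L * h y \<and> X (snd p) w > L * h y) / Fb y < \<epsilon> / N) at_top"
        using e N ij by (auto intro: order_tendstoD(2))
    qed
    then have ev: "eventually (\<lambda>y. \<forall>p\<in>?P. pr (\<lambda>w. X (fst p) w > L * h y \<and> X (snd p) w > L * h y) / Fb y < \<epsilon> / N) at_top"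
      by (rule eventually_ball_finite[OF fin])
    show "eventually (\<lambda>y. pr (\<lambda>w. mx w > L * h y) \<le> \<epsilon> * Fb y) at_top" using ev pos
    proof eventually_elim
      case (elim y)
      have "pr (\<lambda>w. mx w > L * h y) \<le> (\<Sum>p\<in>?P. pr (\<lambda>w. X (fst p) w > L * h y \<and> X (snd p) w > L * h y))"
        by (rule pair_bound2)
      also have "\<dots> \<le> (\<Sum>p\<in>?P. \<epsilon> / N * Fb y)"
        using elim by (intro sum_mono) (auto simp: pos_divide_less_eq less_imp_le)
      also have "\<dots> = (real (card ?P) * (\<epsilon> / N)) * Fb y" by simp
      also have "\<dots> \<le> \<epsilon> * Fb y"
      proof (rule mult_right_mono)
        show "real (card ?P) * (\<epsilon> / N) \<le> \<epsilon>" using N e by (simp add: N_def field_simps)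
      qed simp
      finally show ?case .
    qed
  qed
qed

end

context os begin
lemma lower:
  assumes star: "cond_star M n X h" and pos: "eventually (\<lambda>y. Fb y > 0) at_top"
    and hpos: "eventually (\<lambda>y. h y \<ge> 0) at_top"
    and G: "\<forall>\<epsilon>>0. \<exists>t>0. eventually (\<lambda>y. Fb (y + t * h y) \<ge> (1-\<epsilon>) * Fb y) at_top"
    and E: "E \<ge> 0" and e: "\<epsilon> > 0"
  shows "eventually (\<lambda>y. pr (\<lambda>w. Mx w - E * mx w > y) \<ge> (1-\<epsilon>) * Fb y) at_top"
proof -
  define E' where "E' = E + 1"
  have E': "E' > 0" using E by (simp add: E'_def)
  obtain t where t: "t > 0" "eventually (\<lambda>y. Fb (y + t * h y) \<ge> (1-\<epsilon>/2) * Fb y) at_top"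
    using G e by (meson half_gt_zero)
  have ev2: "eventually (\<lambda>y. pr (\<lambda>w. mx w > (t/E') * h y \<and> Mx w > y) \<le> \<epsilon>/2 * Fb y) at_top"
    by (rule star_pair[OF star pos]) (use t E' e in auto)
  show ?thesis using t(2) ev2 hpos
  proof eventually_elim
    case (elim y)
    have sub: "{w\<in>space M. Mx w > y + t * h y} \<subseteq>
        {w\<in>space M. Mx w - E * mx w > y} \<union> {w\<in>space M. mx w > (t/E') * h y \<and> Mx w > y}"
    proof (intro subsetI)
      fix w assume w: "w \<in> {w\<in>space M. Mx w > y + t * h y}"
      have th: "t * h y \<ge> 0" using t(1) elim(3) by simp
      show "w \<in> {w\<in>space M. Mx w - E * mx w > y} \<union> {w\<in>space M. mx w > (t/E') * h y \<and> Mx w > y}"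
      proof (cases "mx w > (t/E') * h y")
        case True then show ?thesis using w th by auto
      next
        case False
        have "E * mx w \<le> E' * mx w" using mx_nonneg[of w] w by (intro mult_right_mono) (auto simp: E'_def)
        also have "\<dots> \<le> E' * ((t/E') * h y)" using False E' by (intro mult_left_mono) auto
        also have "\<dots> = t * h y" using E' by simp
        finally show ?thesis using w by auto
      qed
    qed
    have "Fb (y + t * h y) \<le> measure M ({w\<in>space M. Mx w - E * mx w > y} \<union> {w\<in>space M. mx w > (t/E') * h y \<and> Mx w > y})"
      by (rule finite_measure_mono[OF sub]) measurable
    also have "\<dots> \<le> pr (\<lambda>w. Mx w - E * mx w > y) + pr (\<lambda>w. mx w > (t/E') * h y \<and> Mx w > y)"
      by (rule sub2) measurable
    finally have "Fb (y + t * h y) \<le> pr (\<lambda>w. Mx w - E * mx w > y) + pr (\<lambda>w. mx w > (t/E') * h y \<and> Mx w > y)" .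
    then show ?case by (rule L_lower[OF _ elim(1) elim(2)])
  qed
qed

end

context os begin
lemma upper:
  assumes G': "\<forall>\<epsilon>>0. \<exists>t>0. eventually (\<lambda>y. Fb (y - t * h y) \<le> (1+\<epsilon>) * Fb y) at_top"
    and R: "\<forall>t>0. \<forall>\<epsilon>>0. eventually (\<lambda>y. pr (\<lambda>w. Mx w + E * mx w > y \<and> mx w > t * h y) \<le> \<epsilon> * Fb y) at_top"
    and E: "E > 0" and e: "\<epsilon> > 0"
  shows "eventually (\<lambda>y. pr (\<lambda>w. Mx w + E * mx w > y) \<le> (1+\<epsilon>) * Fb y) at_top"
proof -
  obtain t where t: "t > 0" "eventually (\<lambda>y. Fb (y - t * h y) \<le> (1+\<epsilon>/2) * Fb y) at_top"
    using G' e by (meson half_gt_zero)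
  have tE: "t/E > 0" using t E by simp
  have e2: "\<epsilon>/2 > 0" using e by simp
  have ev2: "eventually (\<lambda>y. pr (\<lambda>w. Mx w + E * mx w > y \<and> mx w > (t/E) * h y) \<le> \<epsilon>/2 * Fb y) at_top"
    by (rule R[rule_format, OF tE e2])
  show ?thesis using t(2) ev2
  proof eventually_elim
    case (elim y)
    have sub: "{w\<in>space M. Mx w + E * mx w > y} \<subseteq>
        {w\<in>space M. Mx w > y - t * h y} \<union> {w\<in>space M. Mx w + E * mx w > y \<and> mx w > (t/E) * h y}"
    proof (intro subsetI)
      fix w assume w: "w \<in> {w\<in>space M. Mx w + E * mx w > y}"
      show "w \<in> {w\<in>space M. Mx w > y - t * h y} \<union> {w\<in>space M. Mx w + E * mx w > y \<and> mx w > (t/E) * h y}"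
      proof (cases "mx w > (t/E) * h y")
        case True then show ?thesis using w by auto
      next
        case False
        have "E * mx w \<le> E * ((t/E) * h y)" using False E by (intro mult_left_mono) auto
        also have "\<dots> = t * h y" using E by simp
        finally show ?thesis using w by auto
      qed
    qed
    have "pr (\<lambda>w. Mx w + E * mx w > y) \<le> measure M ({w\<in>space M. Mx w > y - t * h y} \<union> {w\<in>space M. Mx w + E * mx w > y \<and> mx w > (t/E) * h y})"
      by (rule finite_measure_mono[OF sub]) measurable
    also have "\<dots> \<le> Fb (y - t * h y) + pr (\<lambda>w. Mx w + E * mx w > y \<and> mx w > (t/E) * h y)"
      by (rule sub2) measurable
    finally have "pr (\<lambda>w. Mx w + E * mx w > y) \<le> Fb (y - t * h y) + pr (\<lambda>w. Mx w + E * mx w > y \<and> mx w > (t/E) * h y)" .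
    then show ?case by (rule L_upper[OF _ elim(1) elim(2)])
  qed
qed

end

context os begin
lemma remC:
  assumes star: "cond_star M n X h" and pos: "eventually (\<lambda>y. Fb y > 0) at_top"
    and E: "E \<ge> 0" and K: "K > 0" and hK: "eventually (\<lambda>y. h (y * (1/(1+E))) \<le> K * h y) at_top"
    and C: "C \<ge> 0" and FC: "eventually (\<lambda>y. Fb (y * (1/(1+E))) \<le> C * Fb y) at_top"
  shows "\<forall>t>0. \<forall>\<epsilon>>0. eventually (\<lambda>y. pr (\<lambda>w. Mx w + E * mx w > y \<and> mx w > t * h y) \<le> \<epsilon> * Fb y) at_top"
proof (intro allI impI)
  fix t \<epsilon> :: real assume t: "t > 0" and e: "\<epsilon> > 0"
  have cpos: "1/(1+E) > 0" using E by simp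
  have fl: "filterlim (\<lambda>y. y * (1/(1+E))) at_top at_top"
    using filterlim_tendsto_pos_mult_at_top[OF tendsto_const[of "1/(1+E)"] cpos filterlim_ident]
    by (simp add: mult.commute)
  have ev: "eventually (\<lambda>y. pr (\<lambda>w. mx w > t * h y \<and> Mx w > y * (1/(1+E))) \<le> \<epsilon> * Fb y) at_top"
    by (rule third[OF star pos fl K hK C FC t e])
  show "eventually (\<lambda>y. pr (\<lambda>w. Mx w + E * mx w > y \<and> mx w > t * h y) \<le> \<epsilon> * Fb y) at_top"
    using ev
  proof eventually_elim
    case (elim y)
    have "pr (\<lambda>w. Mx w + E * mx w > y \<and> mx w > t * h y) \<le> pr (\<lambda>w. mx w > t * h y \<and> Mx w > y * (1/(1+E)))"
    proof (rule finite_measure_mono)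
      show "{w\<in>space M. Mx w + E * mx w > y \<and> mx w > t * h y} \<subseteq> {w\<in>space M. mx w > t * h y \<and> Mx w > y * (1/(1+E))}"
      proof (intro subsetI)
        fix w assume w: "w \<in> {w\<in>space M. Mx w + E * mx w > y \<and> mx w > t * h y}"
        have "E * mx w \<le> E * Mx w" using mx_le_Mx E by (intro mult_left_mono) auto
        then have "y < (1+E) * Mx w" using w by (simp add: algebra_simps)
        then have "y * (1/(1+E)) < Mx w" using E by (simp add: field_simps)
        then show "w \<in> {w\<in>space M. mx w > t * h y \<and> Mx w > y * (1/(1+E))}" using w by auto
      qed
    qed measurable
    then show ?case using elim by (rule order_trans)
  qed
qed

end

context os begin
lemma remAB:
  assumes star: "cond_star M n X h" and ss: "cond_starstar M n X h"
    and pos: "eventually (\<lambda>y. Fb y > 0) at_top"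
    and fl: "\<forall>c>0. filterlim (\<lambda>y. y - c * h y) at_top at_top"
    and Kc: "\<forall>c>0. \<exists>K>0. eventually (\<lambda>y. h (y - c * h y) \<le> K * h y) at_top"
    and Cc: "\<forall>c>0. \<exists>C\<ge>0. eventually (\<lambda>y. Fb (y - c * h y) \<le> C * Fb y) at_top"
    and E: "E > 0"
  shows "\<forall>t>0. \<forall>\<epsilon>>0. eventually (\<lambda>y. pr (\<lambda>w. Mx w + E * mx w > y \<and> mx w > t * h y) \<le> \<epsilon> * Fb y) at_top"
proof (intro allI impI)
  fix t \<epsilon> :: real assume t: "t > 0" and e: "\<epsilon> > 0"
  obtain L where L: "L > 0" and LL: "\<forall>\<epsilon>>0. eventually (\<lambda>y. pr (\<lambda>w. mx w > L * h y) \<le> \<epsilon> * Fb y) at_top"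
    using starstar_ev[OF ss pos] by blast
  define c where "c = E * L"
  have c: "c > 0" using E L by (simp add: c_def)
  obtain K where K: "K > 0" "eventually (\<lambda>y. h (y - c * h y) \<le> K * h y) at_top" using Kc c by blast
  obtain C where C: "C \<ge> 0" "eventually (\<lambda>y. Fb (y - c * h y) \<le> C * Fb y) at_top" using Cc c by blast
  have ev1: "eventually (\<lambda>y. pr (\<lambda>w. mx w > t * h y \<and> Mx w > y - c * h y) \<le> \<epsilon>/2 * Fb y) at_top"
    by (rule third[OF star pos _ K C]) (use fl c t e in auto)
  have e2: "\<epsilon>/2 > 0" using e by simp
  have ev2: "eventually (\<lambda>y. pr (\<lambda>w. mx w > L * h y) \<le> \<epsilon>/2 * Fb y) at_top" by (rule LL[rule_format, OF e2])
  show "eventually (\<lambda>y. pr (\<lambda>w. Mx w + E * mx w > y \<and> mx w > t * h y) \<le> \<epsilon> * Fb y) at_top"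
    using ev1 ev2
  proof eventually_elim
    case (elim y)
    have sub: "{w\<in>space M. Mx w + E * mx w > y \<and> mx w > t * h y} \<subseteq>
       {w\<in>space M. mx w > L * h y} \<union> {w\<in>space M. mx w > t * h y \<and> Mx w > y - c * h y}"
    proof (intro subsetI)
      fix w assume w: "w \<in> {w\<in>space M. Mx w + E * mx w > y \<and> mx w > t * h y}"
      show "w \<in> {w\<in>space M. mx w > L * h y} \<union> {w\<in>space M. mx w > t * h y \<and> Mx w > y - c * h y}"
      proof (cases "mx w > L * h y")
        case True then show ?thesis using w by auto
      next
        case False
        have "E * mx w \<le> E * (L * h y)" using False E by (intro mult_left_mono) auto
        also have "\<dots> = c * h y" by (simp add: c_def)
        finally show ?thesis using w by auto
      qed
    qed
    have "pr (\<lambda>w. Mx w + E * mx w > y \<and> mx w > t * h y) \<le> measure M ({w\<in>space M. mx w > L * h y} \<union> {w\<in>space M. mx w > t * h y \<and> Mx w > y - c * h y})"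
      by (rule finite_measure_mono[OF sub]) measurable
    also have "\<dots> \<le> pr (\<lambda>w. mx w > L * h y) + pr (\<lambda>w. mx w > t * h y \<and> Mx w > y - c * h y)"
      by (rule sub2) measurable
    finally show ?case by (rule L_sum[OF _ elim(2) elim(1)])
  qed
qed


end

lemma ratio_close:
  fixes P F \<delta> \<epsilon> :: real
  assumes "F > 0" "(1-\<delta>)*F \<le> P" "P \<le> (1+\<delta>)*F" "\<delta> < \<epsilon>"
  shows "\<bar>P/F - 1\<bar> < \<epsilon>"
proof -
  have "P/F \<le> 1+\<delta>" "1-\<delta> \<le> P/F" using assms by (simp_all add: divide_le_eq le_divide_eq)
  then show ?thesis using assms(4) by (simp add: abs_less_iff)
qed

lemma ratio_close2:
  fixes F T \<delta> \<epsilon> :: real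
  assumes F: "F > 0" and FT: "F \<le> T" and T: "T \<le> (1+\<delta>)*F" and d: "\<delta> \<ge> 0" "\<delta> < \<epsilon>"
  shows "\<bar>F/T - 1\<bar> < \<epsilon>"
proof -
  have Tp: "T > 0" using F FT by simp
  have "T*(1-\<delta>) \<le> F"
  proof (cases "\<delta> \<le> 1")
    case True
    have "T*(1-\<delta>) \<le> ((1+\<delta>)*F)*(1-\<delta>)" by (rule mult_right_mono) (use T True in auto)
    also have "\<dots> = F - \<delta>*\<delta>*F" by (simp add: algebra_simps)
    also have "\<dots> \<le> F" using F d by simp
    finally show ?thesis .
  next
    case False
    then have "T*(1-\<delta>) \<le> 0" using Tp by (intro mult_nonneg_nonpos) auto
    then show ?thesis using F by simp
  qed
  then have "(1-\<delta>)*T \<le> F" by (simp add: mult.commute)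
  then have "1-\<delta> \<le> F/T" "F/T \<le> 1" using Tp FT by (simp_all add: le_divide_eq divide_le_eq)
  then show ?thesis using d by (simp add: abs_less_iff)
qed

context os begin

lemma part2b: "Fb y \<le> (\<Sum>i\<in>{1..n}. pr (\<lambda>w. X i w > y))"
proof -
  have "{w\<in>space M. Mx w > y} = (\<Union>i\<in>{1..n}. {w\<in>space M. X i w > y})" using Mx_gt by auto
  moreover have "(\<lambda>i. {w\<in>space M. X i w > y}) ` {1..n} \<subseteq> sets M" using sets_X1 by auto
  ultimately show ?thesis
    using finite_measure_subadditive_finite[of "{1..n}" "\<lambda>i. {w\<in>space M. X i w > y}"]
    by simp
qed

lemma part2:
  assumes star: "cond_star M n X h" and pos: "eventually (\<lambda>y. Fb y > 0) at_top"
    and hle: "eventually (\<lambda>y. h y \<le> y) at_top" and e: "\<epsilon> > 0"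
  shows "eventually (\<lambda>y. (\<Sum>i\<in>{1..n}. pr (\<lambda>w. X i w > y)) \<le> (1+\<epsilon>) * Fb y) at_top"
proof -
  have ev: "eventually (\<lambda>y. (\<Sum>p\<in>Pairs. pr (\<lambda>w. \<bar>X (fst p) w\<bar> > 1 * h y \<and> X (snd p) w > y)) \<le> \<epsilon> * Fb y) at_top"
    by (rule star_ev[OF star pos _ e]) simp
  show ?thesis using ev hle
  proof eventually_elim
    case (elim y)
    define B where "B i = {w\<in>space M. X i w > y} - (\<Union>j\<in>{1..n}-{i}. {w\<in>space M. X j w > y})" for i
    have Bs: "B i \<in> sets M" if "i \<in> {1..n}" for i
      unfolding B_def using that by (intro sets.Diff sets.finite_UN sets_X1) auto
    have each: "pr (\<lambda>w. X i w > y) \<le> measure M (B i) + (\<Sum>j\<in>{1..n}-{i}. pr (\<lambda>w. X i w > y \<and> X j w > y))"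
      if i: "i \<in> {1..n}" for i
    proof -
      have sub: "{w\<in>space M. X i w > y} \<subseteq> B i \<union> (\<Union>j\<in>{1..n}-{i}. {w\<in>space M. X i w > y \<and> X j w > y})"
        unfolding B_def by auto
      have U: "(\<Union>j\<in>{1..n}-{i}. {w\<in>space M. X i w > y \<and> X j w > y}) \<in> sets M"
        using i by (intro sets.finite_UN sets_Xi2) auto
      have a1: "pr (\<lambda>w. X i w > y) \<le> measure M (B i \<union> (\<Union>j\<in>{1..n}-{i}. {w\<in>space M. X i w > y \<and> X j w > y}))"
        by (rule finite_measure_mono[OF sub]) (use Bs[OF i] U in auto)
      have a2: "measure M (B i \<union> (\<Union>j\<in>{1..n}-{i}. {w\<in>space M. X i w > y \<and> X j w > y}))
          \<le> measure M (B i) + measure M (\<Union>j\<in>{1..n}-{i}. {w\<in>space M. X i w > y \<and> X j w > y})"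
        by (rule sub2[OF Bs[OF i] U])
      have a3: "measure M (\<Union>j\<in>{1..n}-{i}. {w\<in>space M. X i w > y \<and> X j w > y})
          \<le> (\<Sum>j\<in>{1..n}-{i}. pr (\<lambda>w. X i w > y \<and> X j w > y))"
        by (rule finite_measure_subadditive_finite) (use i sets_Xi2 in auto)
      show ?thesis by (rule L_each[OF a1 a2 a3])
    qed
    have disj: "disjoint_family_on B {1..n}" unfolding disjoint_family_on_def B_def by auto
    have "(\<Sum>i\<in>{1..n}. measure M (B i)) = measure M (\<Union>i\<in>{1..n}. B i)"
      by (rule finite_measure_finite_Union[symmetric]) (use Bs disj in auto)
    also have "\<dots> \<le> Fb y"
    proof (rule finite_measure_mono)
      show "(\<Union>i\<in>{1..n}. B i) \<subseteq> {w\<in>space M. Mx w > y}" unfolding B_def using Mx_gt by auto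
    qed measurable
    finally have sB: "(\<Sum>i\<in>{1..n}. measure M (B i)) \<le> Fb y" .
    have "(\<Sum>i\<in>{1..n}. \<Sum>j\<in>{1..n}-{i}. pr (\<lambda>w. X i w > y \<and> X j w > y))
        = (\<Sum>p\<in>Pairs. pr (\<lambda>w. X (fst p) w > y \<and> X (snd p) w > y))"
      by (subst sum.Sigma) (auto simp: split_def)
    also have "\<dots> \<le> (\<Sum>p\<in>Pairs. pr (\<lambda>w. \<bar>X (fst p) w\<bar> > 1 * h y \<and> X (snd p) w > y))"
    proof (rule sum_mono)
      fix p assume p: "p \<in> Pairs"
      show "pr (\<lambda>w. X (fst p) w > y \<and> X (snd p) w > y) \<le> pr (\<lambda>w. \<bar>X (fst p) w\<bar> > 1 * h y \<and> X (snd p) w > y)"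
      proof (rule finite_measure_mono)
        show "{w\<in>space M. X (fst p) w > y \<and> X (snd p) w > y} \<subseteq> {w\<in>space M. \<bar>X (fst p) w\<bar> > 1 * h y \<and> X (snd p) w > y}"
          using elim(2) by auto
        show "{w\<in>space M. \<bar>X (fst p) w\<bar> > 1 * h y \<and> X (snd p) w > y} \<in> sets M"
          using p by (intro sets_Xi) auto
      qed
    qed
    also have "\<dots> \<le> \<epsilon> * Fb y" by (rule elim(1))
    finally have sP: "(\<Sum>i\<in>{1..n}. \<Sum>j\<in>{1..n}-{i}. pr (\<lambda>w. X i w > y \<and> X j w > y)) \<le> \<epsilon> * Fb y" .
    have "(\<Sum>i\<in>{1..n}. pr (\<lambda>w. X i w > y)) \<le>
        (\<Sum>i\<in>{1..n}. measure M (B i) + (\<Sum>j\<in>{1..n}-{i}. pr (\<lambda>w. X i w > y \<and> X j w > y)))"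
      by (intro sum_mono each)
    also have "\<dots> = (\<Sum>i\<in>{1..n}. measure M (B i)) + (\<Sum>i\<in>{1..n}. \<Sum>j\<in>{1..n}-{i}. pr (\<lambda>w. X i w > y \<and> X j w > y))"
      by (simp add: sum.distrib)
    finally show ?case by (rule L_p2[OF _ sB sP])
  qed
qed

lemma sum_bound:
  assumes w: "w \<in> space M" and c0: "a \<le> c 0" "a > 0" and ci: "\<forall>i\<in>{1..n-1}. c i \<in> {-d..d}" and d: "d \<ge> 0"
  shows "\<bar>(\<Sum>i=0..n-1. c i * ordstat n X (n - i) w) - c 0 * Mx w\<bar> \<le> c 0 * (d * real (n-1) / a) * mx w"
proof -
  have split: "(\<Sum>i=0..n-1. c i * ordstat n X (n - i) w) = c 0 * Mx w + (\<Sum>i=1..n-1. c i * ordstat n X (n - i) w)"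
    by (subst sum.atLeast_Suc_atMost) auto
  have "\<bar>\<Sum>i=1..n-1. c i * ordstat n X (n-i) w\<bar> \<le> (\<Sum>i=1..n-1. \<bar>c i * ordstat n X (n-i) w\<bar>)" by (rule sum_abs)
  also have "\<dots> \<le> (\<Sum>i=1..n-1. d * mx w)"
  proof (rule sum_mono)
    fix i assume i: "i \<in> {1..n-1}"
    have o0: "ordstat n X (n-i) w \<ge> 0" using os_nonneg[of w "n-i"] w i n2 by auto
    have om: "ordstat n X (n-i) w \<le> mx w" using os_mono[where k="n-i" and k'="n-1" and w=w] i n2 unfolding mx_def by auto
    have cd: "c i \<in> {-d..d}" using ci i by blast
    then have cd': "\<bar>c i\<bar> \<le> d" by (simp add: abs_le_iff)
    have "\<bar>c i * ordstat n X (n-i) w\<bar> = \<bar>c i\<bar> * ordstat n X (n-i) w" using o0 by (simp add: abs_mult)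
    also have "\<dots> \<le> d * mx w" using cd' o0 om d by (intro mult_mono) auto
    finally show "\<bar>c i * ordstat n X (n-i) w\<bar> \<le> d * mx w" .
  qed
  also have "\<dots> = (real (n-1) * d) * mx w" by simp
  also have "\<dots> \<le> c 0 * (d * real (n-1) / a) * mx w"
  proof (rule mult_right_mono)
    have "c 0 / a \<ge> 1" using c0 by simp
    then have "1 * (real (n-1) * d) \<le> (c 0 / a) * (real (n-1) * d)" using d by (intro mult_right_mono) auto
    then show "real (n-1) * d \<le> c 0 * (d * real (n-1) / a)" by (simp add: field_simps)
    show "0 \<le> mx w" using mx_nonneg w by simp
  qed
  finally show ?thesis using split by simp
qed

lemma finish:
  assumes pos: "eventually (\<lambda>y. Fb y > 0) at_top" and hle: "eventually (\<lambda>y. h y \<le> y) at_top"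
    and star: "cond_star M n X h"
    and LB: "\<forall>E\<ge>0. \<forall>\<epsilon>>0. eventually (\<lambda>y. pr (\<lambda>w. Mx w - E * mx w > y) \<ge> (1-\<epsilon>) * Fb y) at_top"
    and UB: "\<forall>E\<ge>0. \<forall>\<epsilon>>0. eventually (\<lambda>y. pr (\<lambda>w. Mx w + E * mx w > y) \<le> (1+\<epsilon>) * Fb y) at_top"
    and a: "0 < a" "a \<le> b" "0 \<le> d"
  shows "\<forall>\<epsilon>>0. eventually (\<lambda>x. \<forall>c. c 0 \<in> {a..b} \<and> (\<forall>i\<in>{1..n-1}. c i \<in> {-d..d}) \<longrightarrow>
            \<bar>measure M {\<omega> \<in> space M. (\<Sum>i=0..n-1. c i * ordstat n X (n - i) \<omega>) > x}
               / measure M {\<omega> \<in> space M. c 0 * ordstat n X n \<omega> > x} - 1\<bar> < \<epsilon> \<and>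
            \<bar>measure M {\<omega> \<in> space M. c 0 * ordstat n X n \<omega> > x}
               / (\<Sum>i=1..n. measure M {\<omega> \<in> space M. c 0 * X i \<omega> > x}) - 1\<bar> < \<epsilon>) at_top"
proof (intro allI impI)
  fix \<epsilon> :: real assume e: "\<epsilon> > 0"
  define E where "E = d * real (n-1) / a"
  have E0: "E \<ge> 0" using a by (simp add: E_def)
  have e2: "\<epsilon>/2 > 0" using e by simp
  have ev: "eventually (\<lambda>y. Fb y > 0 \<and> pr (\<lambda>w. Mx w + E * mx w > y) \<le> (1+\<epsilon>/2) * Fb y \<and>
      pr (\<lambda>w. Mx w - E * mx w > y) \<ge> (1-\<epsilon>/2) * Fb y \<and>
      (\<Sum>i\<in>{1..n}. pr (\<lambda>w. X i w > y)) \<le> (1+\<epsilon>/2) * Fb y) at_top"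
    by (intro eventually_conj pos UB[rule_format, OF E0 e2] LB[rule_format, OF E0 e2] part2[OF star pos hle e2])
  then obtain Y where Y: "\<And>y. y \<ge> Y \<Longrightarrow> Fb y > 0 \<and> pr (\<lambda>w. Mx w + E * mx w > y) \<le> (1+\<epsilon>/2) * Fb y \<and>
      pr (\<lambda>w. Mx w - E * mx w > y) \<ge> (1-\<epsilon>/2) * Fb y \<and>
      (\<Sum>i\<in>{1..n}. pr (\<lambda>w. X i w > y)) \<le> (1+\<epsilon>/2) * Fb y"
    unfolding eventually_at_top_linorder by blast
  define Y' where "Y' = max Y 1"
  have Y': "Y' > 0" "Y' \<ge> Y" unfolding Y'_def by auto
  show "eventually (\<lambda>x. \<forall>c. c 0 \<in> {a..b} \<and> (\<forall>i\<in>{1..n-1}. c i \<in> {-d..d}) \<longrightarrow>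
            \<bar>measure M {\<omega> \<in> space M. (\<Sum>i=0..n-1. c i * ordstat n X (n - i) \<omega>) > x}
               / measure M {\<omega> \<in> space M. c 0 * ordstat n X n \<omega> > x} - 1\<bar> < \<epsilon> \<and>
            \<bar>measure M {\<omega> \<in> space M. c 0 * ordstat n X n \<omega> > x}
               / (\<Sum>i=1..n. measure M {\<omega> \<in> space M. c 0 * X i \<omega> > x}) - 1\<bar> < \<epsilon>) at_top"
    unfolding eventually_at_top_linorder
  proof (intro exI[of _ "b * Y'"] allI impI)
    fix x and c :: "nat \<Rightarrow> real"
    assume x: "x \<ge> b * Y'" and c: "c 0 \<in> {a..b} \<and> (\<forall>i\<in>{1..n-1}. c i \<in> {-d..d})"
    have c0: "a \<le> c 0" "c 0 \<le> b" "c 0 > 0" using c a by auto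
    have ci: "\<forall>i\<in>{1..n-1}. c i \<in> {-d..d}" using c by blast
    define y where "y = x / c 0"
    have "c 0 * Y' \<le> b * Y'" using c0 Y' by (intro mult_right_mono) auto
    then have "Y' * c 0 \<le> x" using x by (simp add: mult.commute)
    then have "Y' \<le> y" unfolding y_def using c0 by (simp add: pos_le_divide_eq)
    then have yY: "Y \<le> y" using Y' by linarith
    note Yy = Y[OF yY]
    have cx: "\<And>v. (x < c 0 * v) = (y < v)"
      using pos_divide_less_eq[OF c0(3), of x] by (simp add: y_def mult.commute)
    define S where "S \<omega> = (\<Sum>i=0..n-1. c i * ordstat n X (n - i) \<omega>)" for \<omega>
    have bnd: "\<bar>S w - c 0 * Mx w\<bar> \<le> c 0 * E * mx w" if "w \<in> space M" for w
      using sum_bound[OF that c0(1) a(1) ci a(3)] unfolding S_def E_def .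
    have Smeas: "S \<in> borel_measurable M" unfolding S_def
    proof (rule borel_measurable_sum)
      fix i assume i: "i \<in> {0..n-1}"
      then have [measurable]: "ordstat n X (n-i) \<in> borel_measurable M" using os_meas n2 by auto
      show "(\<lambda>\<omega>. c i * ordstat n X (n-i) \<omega>) \<in> borel_measurable M" by measurable
    qed
    have Ssets: "{w\<in>space M. x < S w} \<in> sets M" using Smeas borel_measurable_iff_greater by blast
    have SU: "{w\<in>space M. S w > x} \<subseteq> {w\<in>space M. Mx w + E * mx w > y}"
    proof (intro subsetI)
      fix w assume w: "w \<in> {w\<in>space M. S w > x}"
      then have "S w \<le> c 0 * Mx w + c 0 * E * mx w" using bnd[of w] by (simp add: abs_le_iff)
      then have "x < c 0 * (Mx w + E * mx w)" using w by (simp add: algebra_simps)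
      then show "w \<in> {w\<in>space M. Mx w + E * mx w > y}" using cx w by auto
    qed
    have SL: "{w\<in>space M. Mx w - E * mx w > y} \<subseteq> {w\<in>space M. S w > x}"
    proof (intro subsetI)
      fix w assume w: "w \<in> {w\<in>space M. Mx w - E * mx w > y}"
      then have "x < c 0 * (Mx w - E * mx w)" using cx by auto
      moreover have "c 0 * Mx w - c 0 * E * mx w \<le> S w" using bnd[of w] w by (simp add: abs_le_iff)
      ultimately show "w \<in> {w\<in>space M. S w > x}" using w by (simp add: algebra_simps)
    qed
    have P1: "pr (\<lambda>w. S w > x) \<le> pr (\<lambda>w. Mx w + E * mx w > y)" by (rule finite_measure_mono[OF SU]) measurable
    have P2: "pr (\<lambda>w. Mx w - E * mx w > y) \<le> pr (\<lambda>w. S w > x)" by (rule finite_measure_mono[OF SL Ssets])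
    have eq0: "{\<omega> \<in> space M. c 0 * ordstat n X n \<omega> > x} = {w\<in>space M. Mx w > y}" using cx by auto
    have eqi: "(\<Sum>i=1..n. measure M {\<omega> \<in> space M. c 0 * X i \<omega> > x}) = (\<Sum>i\<in>{1..n}. pr (\<lambda>w. X i w > y))"
      using cx by simp
    have r1: "\<bar>pr (\<lambda>w. S w > x) / Fb y - 1\<bar> < \<epsilon>"
      by (rule ratio_close[where \<delta>="\<epsilon>/2"]) (use Yy P1 P2 e in auto)
    have r2: "\<bar>Fb y / (\<Sum>i\<in>{1..n}. pr (\<lambda>w. X i w > y)) - 1\<bar> < \<epsilon>"
      by (rule ratio_close2[where \<delta>="\<epsilon>/2"]) (use Yy part2b e in auto)
    show "\<bar>measure M {\<omega> \<in> space M. (\<Sum>i=0..n-1. c i * ordstat n X (n - i) \<omega>) > x}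
               / measure M {\<omega> \<in> space M. c 0 * ordstat n X n \<omega> > x} - 1\<bar> < \<epsilon> \<and>
            \<bar>measure M {\<omega> \<in> space M. c 0 * ordstat n X n \<omega> > x}
               / (\<Sum>i=1..n. measure M {\<omega> \<in> space M. c 0 * X i \<omega> > x}) - 1\<bar> < \<epsilon>"
    proof -
      have eqS: "measure M {\<omega> \<in> space M. (\<Sum>i=0..n-1. c i * ordstat n X (n - i) \<omega>) > x} = pr (\<lambda>w. S w > x)"
        by (simp add: S_def)
      show ?thesis unfolding eqS eq0 eqi using r1 r2 by (rule conjI)
    qed
  qed
qed

end

lemma limsup_bound:
  fixes f g :: "real \<Rightarrow> real"
  assumes "Limsup at_top (\<lambda>x. ereal (f x / g x)) < \<infinity>" "eventually (\<lambda>x. g x > 0) at_top"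
  shows "\<exists>K>0. eventually (\<lambda>x. f x \<le> K * g x) at_top"
proof -
  obtain B where B: "Limsup at_top (\<lambda>x. ereal (f x / g x)) < ereal B"
    using ereal_dense2[OF assms(1)] by blast
  have "eventually (\<lambda>x. ereal (f x / g x) < ereal B) at_top" by (rule Limsup_lessD[OF B])
  then have "eventually (\<lambda>x. f x \<le> max B 1 * g x) at_top" using assms(2)
  proof eventually_elim
    case (elim x)
    then have "f x < B * g x" by (simp add: pos_divide_less_eq)
    also have "\<dots> \<le> max B 1 * g x" using elim by (intro mult_right_mono) auto
    finally show ?case by simp
  qed
  then show ?thesis by (intro exI[of _ "max B 1"]) auto
qed

lemma fl_lemma:
  fixes h :: "real \<Rightarrow> real"
  assumes "eventually (\<lambda>y. c * h y \<le> y / 2) at_top"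
  shows "filterlim (\<lambda>y. y - c * h y) at_top at_top"
proof (rule filterlim_at_top_mono)
  show "filterlim (\<lambda>y. (1/2::real) * y) at_top at_top"
    by (rule filterlim_tendsto_pos_mult_at_top[OF tendsto_const _ filterlim_ident]) simp
  show "eventually (\<lambda>y. (1/2::real) * y \<le> y - c * h y) at_top" using assms by eventually_elim simp
qed

lemma small_from_lim:
  fixes h :: "real \<Rightarrow> real"
  assumes "((\<lambda>x. h x / x) \<longlongrightarrow> 0) at_top" "\<delta> > 0"
  shows "eventually (\<lambda>y. h y \<le> \<delta> * y) at_top"
proof -
  have "eventually (\<lambda>x. h x / x < \<delta>) at_top" by (rule order_tendstoD(2)[OF assms])
  moreover have "eventually (\<lambda>x. (x::real) > 0) at_top" by (rule eventually_gt_at_top)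
  ultimately show ?thesis by eventually_elim (simp add: pos_divide_less_eq less_imp_le)
qed

context os begin

lemma G_from:
  assumes pos: "eventually (\<lambda>y. Fb y > 0) at_top"
    and lim: "((\<lambda>x. Fb (x + t * h x) / Fb x) \<longlongrightarrow> l) at_top" and l: "l > 1 - \<epsilon>"
  shows "eventually (\<lambda>y. Fb (y + t * h y) \<ge> (1-\<epsilon>) * Fb y) at_top"
  using order_tendstoD(1)[OF lim l] pos
  by eventually_elim (simp add: pos_less_divide_eq less_imp_le)

lemma G'_from:
  assumes pos: "eventually (\<lambda>y. Fb y > 0) at_top"
    and lim: "((\<lambda>x. Fb (x - t * h x) / Fb x) \<longlongrightarrow> l) at_top" and l: "l < 1 + \<epsilon>"
  shows "eventually (\<lambda>y. Fb (y - t * h y) \<le> (1+\<epsilon>) * Fb y) at_top"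
  using order_tendstoD(2)[OF lim l] pos
  by eventually_elim (simp add: pos_divide_less_eq less_imp_le)

lemma LB_all:
  assumes star: "cond_star M n X h" and pos: "eventually (\<lambda>y. Fb y > 0) at_top"
    and hpos: "eventually (\<lambda>y. h y \<ge> 0) at_top"
    and G: "\<forall>\<epsilon>>0. \<exists>t>0. eventually (\<lambda>y. Fb (y + t * h y) \<ge> (1-\<epsilon>) * Fb y) at_top"
  shows "\<forall>E\<ge>0. \<forall>\<epsilon>>0. eventually (\<lambda>y. pr (\<lambda>w. Mx w - E * mx w > y) \<ge> (1-\<epsilon>) * Fb y) at_top"
  using lower[OF star pos hpos G] by blast

lemma UB_all:
  assumes G': "\<forall>\<epsilon>>0. \<exists>t>0. eventually (\<lambda>y. Fb (y - t * h y) \<le> (1+\<epsilon>) * Fb y) at_top"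
    and R: "\<forall>E>0. \<forall>t>0. \<forall>\<epsilon>>0. eventually (\<lambda>y. pr (\<lambda>w. Mx w + E * mx w > y \<and> mx w > t * h y) \<le> \<epsilon> * Fb y) at_top"
  shows "\<forall>E\<ge>0. \<forall>\<epsilon>>0. eventually (\<lambda>y. pr (\<lambda>w. Mx w + E * mx w > y) \<le> (1+\<epsilon>) * Fb y) at_top"
proof (intro allI impI)
  fix E \<epsilon> :: real assume E: "E \<ge> 0" and e: "\<epsilon> > 0"
  have E1: "E + 1 > 0" using E by simp
  have "eventually (\<lambda>y. pr (\<lambda>w. Mx w + (E+1) * mx w > y) \<le> (1+\<epsilon>) * Fb y) at_top"
    by (rule upper[OF G' _ E1 e]) (use R E1 in blast)
  then show "eventually (\<lambda>y. pr (\<lambda>w. Mx w + E * mx w > y) \<le> (1+\<epsilon>) * Fb y) at_top"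
  proof eventually_elim
    case (elim y)
    have "pr (\<lambda>w. Mx w + E * mx w > y) \<le> pr (\<lambda>w. Mx w + (E+1) * mx w > y)"
    proof (rule finite_measure_mono)
      show "{w\<in>space M. Mx w + E * mx w > y} \<subseteq> {w\<in>space M. Mx w + (E+1) * mx w > y}"
      proof (intro subsetI)
        fix w assume w: "w \<in> {w\<in>space M. Mx w + E * mx w > y}"
        have "mx w \<ge> 0" using mx_nonneg w by auto
        then show "w \<in> {w\<in>space M. Mx w + (E+1) * mx w > y}" using w by (simp add: algebra_simps)
      qed
    qed measurable
    then show ?case using elim by (rule order_trans)
  qed
qed

lemma hclass_facts:
  assumes "h \<in> Hclass (distF M Mx)"
  shows "eventually (\<lambda>y. h y > 0) at_top" "((\<lambda>x. h x / x) \<longlongrightarrow> 0) at_top"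
    "\<forall>s. ((\<lambda>x. Fb (x + s * h x) / Fb x) \<longlongrightarrow> 1) at_top"
    "\<forall>s. Limsup at_top (\<lambda>x. ereal (h (x + s * h x) / h x)) < \<infinity>"
  using assms unfolding Hclass_def by (auto simp: Fb_eq)

lemma lt_pos:
  assumes "longtailed (distF M Mx)"
  shows "eventually (\<lambda>y. Fb y > 0) at_top"
proof -
  have "\<forall>x\<ge>0. Fb x > 0" using assms unfolding longtailed_def by (auto simp: Fb_eq)
  then show ?thesis unfolding eventually_at_top_linorder by blast
qed

lemma hclass_hyps:
  assumes lt: "longtailed (distF M Mx)" and hH: "h \<in> Hclass (distF M Mx)"
  shows "eventually (\<lambda>y. Fb y > 0) at_top" "eventually (\<lambda>y. h y \<ge> 0) at_top"
    "eventually (\<lambda>y. h y \<le> y) at_top"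
    "\<forall>\<epsilon>>0. \<exists>t>0. eventually (\<lambda>y. Fb (y + t * h y) \<ge> (1-\<epsilon>) * Fb y) at_top"
    "\<forall>\<epsilon>>0. \<exists>t>0. eventually (\<lambda>y. Fb (y - t * h y) \<le> (1+\<epsilon>) * Fb y) at_top"
proof -
  note hf = hclass_facts[OF hH]
  show pos: "eventually (\<lambda>y. Fb y > 0) at_top" by (rule lt_pos[OF lt])
  show "eventually (\<lambda>y. h y \<ge> 0) at_top" using hf(1) by eventually_elim simp
  show "eventually (\<lambda>y. h y \<le> y) at_top" using small_from_lim[OF hf(2), of 1] by simp
  show "\<forall>\<epsilon>>0. \<exists>t>0. eventually (\<lambda>y. Fb (y + t * h y) \<ge> (1-\<epsilon>) * Fb y) at_top"
  proof (intro allI impI exI[of _ 1] conjI)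
    fix \<epsilon> :: real assume "\<epsilon> > 0"
    then show "eventually (\<lambda>y. Fb (y + 1 * h y) \<ge> (1-\<epsilon>) * Fb y) at_top"
      by (intro G_from[OF pos hf(3)[rule_format, of 1]]) simp
  qed simp
  show "\<forall>\<epsilon>>0. \<exists>t>0. eventually (\<lambda>y. Fb (y - t * h y) \<le> (1+\<epsilon>) * Fb y) at_top"
  proof (intro allI impI exI[of _ 1] conjI)
    fix \<epsilon> :: real assume e: "\<epsilon> > 0"
    have eq: "x + -1 * h x = x - 1 * h x" for x :: real by simp
    have "((\<lambda>x. Fb (x - 1 * h x) / Fb x) \<longlongrightarrow> 1) at_top" using hf(3)[rule_format, of "-1"] unfolding eq .
    then show "eventually (\<lambda>y. Fb (y - 1 * h y) \<le> (1+\<epsilon>) * Fb y) at_top"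
      by (rule G'_from[OF pos]) (use e in simp)
  qed simp
qed

lemma caseB:
  assumes lt: "longtailed (distF M Mx)" and hH: "h \<in> Hclass (distF M Mx)"
    and star: "cond_star M n X h" and ss: "cond_starstar M n X h"
  shows "\<forall>E>0. \<forall>t>0. \<forall>\<epsilon>>0. eventually (\<lambda>y. pr (\<lambda>w. Mx w + E * mx w > y \<and> mx w > t * h y) \<le> \<epsilon> * Fb y) at_top"
proof (rule allI, rule impI)
  fix E :: real assume E: "E > 0"
  note hf = hclass_facts[OF hH]
  note hy = hclass_hyps[OF lt hH]
  show "\<forall>t>0. \<forall>\<epsilon>>0. eventually (\<lambda>y. pr (\<lambda>w. Mx w + E * mx w > y \<and> mx w > t * h y) \<le> \<epsilon> * Fb y) at_top"
  proof (rule remAB[OF star ss hy(1) _ _ _ E])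
    show "\<forall>c>0. filterlim (\<lambda>y. y - c * h y) at_top at_top"
    proof (intro allI impI fl_lemma)
      fix c :: real assume c: "c > 0"
      have "eventually (\<lambda>y. h y \<le> (1/(2*c)) * y) at_top" by (rule small_from_lim[OF hf(2)]) (use c in simp)
      then show "eventually (\<lambda>y. c * h y \<le> y / 2) at_top"
      proof eventually_elim
        case (elim y)
        have "c * h y \<le> c * ((1/(2*c)) * y)" using elim c by (intro mult_left_mono) auto
        then show ?case using c by simp
      qed
    qed
    show "\<forall>c>0. \<exists>K>0. eventually (\<lambda>y. h (y - c * h y) \<le> K * h y) at_top"
    proof (intro allI impI)
      fix c :: real assume c: "c > 0"
      have "Limsup at_top (\<lambda>x. ereal (h (x - c * h x) / h x)) < \<infinity>"
        using hf(4)[rule_format, of "-c"] by simp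
      then show "\<exists>K>0. eventually (\<lambda>y. h (y - c * h y) \<le> K * h y) at_top"
        by (rule limsup_bound[OF _ hf(1)])
    qed
    show "\<forall>c>0. \<exists>C\<ge>0. eventually (\<lambda>y. Fb (y - c * h y) \<le> C * Fb y) at_top"
    proof (intro allI impI exI[of _ 2] conjI)
      fix c :: real assume c: "c > 0"
      have "((\<lambda>x. Fb (x - c * h x) / Fb x) \<longlongrightarrow> 1) at_top" using hf(3)[rule_format, of "-c"] by simp
      from G'_from[OF hy(1) this, of 1]
      show "eventually (\<lambda>y. Fb (y - c * h y) \<le> 2 * Fb y) at_top" by simp
    qed simp
  qed
qed

lemma caseC:
  assumes lt: "longtailed (distF M Mx)" and dd: "domvar_dist (distF M Mx)"
    and hH: "h \<in> Hclass (distF M Mx)" and dh: "domvar h"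
    and star: "cond_star M n X h"
  shows "\<forall>E>0. \<forall>t>0. \<forall>\<epsilon>>0. eventually (\<lambda>y. pr (\<lambda>w. Mx w + E * mx w > y \<and> mx w > t * h y) \<le> \<epsilon> * Fb y) at_top"
proof (rule allI, rule impI)
  fix E :: real assume E: "E > 0"
  note hf = hclass_facts[OF hH]
  note hy = hclass_hyps[OF lt hH]
  have c: "1/(1+E) > 0" using E by simp
  have "Limsup at_top (\<lambda>x. ereal (h (x * (1/(1+E))) / h x)) < \<infinity>"
    using dh c unfolding domvar_def by blast
  from limsup_bound[OF this hf(1)] obtain K where K: "K > 0" "eventually (\<lambda>y. h (y * (1/(1+E))) \<le> K * h y) at_top"
    by blast
  have dF: "domvar Fb" using dd unfolding domvar_dist_def Fb_eq_fun .
  have "Limsup at_top (\<lambda>x. ereal (Fb (x * (1/(1+E))) / Fb x)) < \<infinity>"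
    using dF c unfolding domvar_def by blast
  from limsup_bound[OF this hy(1)] obtain C where C: "C > 0" "eventually (\<lambda>y. Fb (y * (1/(1+E))) \<le> C * Fb y) at_top"
    by blast
  show "\<forall>t>0. \<forall>\<epsilon>>0. eventually (\<lambda>y. pr (\<lambda>w. Mx w + E * mx w > y \<and> mx w > t * h y) \<le> \<epsilon> * Fb y) at_top"
    by (rule remC[OF star hy(1) _ K _ C(2)]) (use E C in auto)
qed

end

context os begin

lemma endpoint_pos:
  assumes ep: "upper_endpoint (distF M Mx) = \<infinity>"
  shows "Fb y > 0"
proof -
  have "ereal y < Sup (ereal ` {x. distF M Mx x < 1})" using ep unfolding upper_endpoint_def by simp
  then have "\<exists>z\<in>ereal ` {x. distF M Mx x < 1}. ereal y < z" by (simp only: less_Sup_iff)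
  then obtain x where x: "distF M Mx x < 1" "ereal y < ereal x" by blast
  then have x2: "y < x" by simp
  have "Fb x > 0" using x(1) Fb_eq[of x] by simp
  moreover have "Fb x \<le> Fb y" using x2 by (intro Fb_mono) simp
  ultimately show ?thesis by simp
qed

lemma Fb_lim0:
  assumes eta: "\<eta> > 0"
  shows "eventually (\<lambda>y. Fb y < \<eta>) at_top"
proof -
  define A where "A k = {w\<in>space M. Mx w > real k}" for k :: nat
  have "(\<lambda>k. measure M (A k)) \<longlonglongrightarrow> measure M (\<Inter>k. A k)"
  proof (rule finite_Lim_measure_decseq)
    show "range A \<subseteq> sets M"
    proof (intro subsetI)
      fix S assume "S \<in> range A"
      then obtain k where Sk: "S = A k" by auto
      show "S \<in> sets M" unfolding Sk A_def by measurable
    qed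
    show "decseq A"
    proof (rule decseq_SucI)
      show "A (Suc k) \<subseteq> A k" for k unfolding A_def by auto
    qed
  qed
  moreover have "(\<Inter>k. A k) = {}"
  proof (rule equals0I)
    fix w assume w: "w \<in> (\<Inter>k. A k)"
    obtain k where k: "Mx w < real k" using reals_Archimedean2 by blast
    have "w \<in> A k" using w by blast
    then have "Mx w > real k" unfolding A_def by simp
    then show False using k by simp
  qed
  ultimately have "(\<lambda>k. Fb (real k)) \<longlonglongrightarrow> 0" unfolding A_def by simp
  then have "eventually (\<lambda>k. Fb (real k) < \<eta>) sequentially" using eta by (rule order_tendstoD(2))
  then obtain N where N: "Fb (real N) < \<eta>" unfolding eventually_sequentially by auto
  show ?thesis unfolding eventually_at_top_linorder
  proof (intro exI[of _ "real N"] allI impI)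
    fix y assume "y \<ge> real N"
    then have "Fb y \<le> Fb (real N)" by (rule Fb_mono)
    then show "Fb y < \<eta>" using N by simp
  qed
qed

lemma gm_lim:
  assumes ep: "upper_endpoint (distF M Mx) = \<infinity>" and gm: "gmda (distF M Mx) h"
  shows "((\<lambda>x. Fb (x + s * h x) / Fb x) \<longlongrightarrow> exp (- s)) at_top"
proof -
  have "\<forall>y. ((\<lambda>x. Fb (x + y * h x) / Fb x) \<longlongrightarrow> exp (- y)) at_top"
    using gm ep unfolding gmda_def by (simp add: Fb_eq)
  then show ?thesis by blast
qed

lemma caseA_small:
  assumes ep: "upper_endpoint (distF M Mx) = \<infinity>" and gm: "gmda (distF M Mx) h"
    and d: "\<delta> > 0"
  shows "eventually (\<lambda>y. h y < \<delta> * y) at_top"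
proof -
  define q where "q = 1/\<delta>"
  have q: "q > 0" using d by (simp add: q_def)
  have lim: "((\<lambda>x. Fb (x - q * h x) / Fb x) \<longlongrightarrow> exp q) at_top" using gm_lim[OF ep gm, of "-q"] by simp
  have ev1: "eventually (\<lambda>x. Fb (x - q * h x) / Fb x < exp q + 1) at_top"
    by (rule order_tendstoD(2)[OF lim]) simp
  have F0: "Fb 0 > 0" by (rule endpoint_pos[OF ep])
  have eq1: "exp q + 1 > 0" by (simp add: add_pos_pos)
  have ev2: "eventually (\<lambda>x. Fb x < Fb 0 / (exp q + 1)) at_top"
    by (rule Fb_lim0) (use F0 eq1 in simp)
  show ?thesis using ev1 ev2 eventually_gt_at_top[of 0]
  proof eventually_elim
    case (elim x)
    have Fx: "Fb x > 0" by (rule endpoint_pos[OF ep])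
    show ?case
    proof (rule ccontr)
      assume "\<not> h x < \<delta> * x"
      then have "\<delta> * x \<le> h x" by simp
      then have "q * (\<delta> * x) \<le> q * h x" using q by (intro mult_left_mono) auto
      moreover have "q * (\<delta> * x) = x" using d by (simp add: q_def)
      ultimately have "x - q * h x \<le> 0" by simp
      then have a: "Fb 0 \<le> Fb (x - q * h x)" by (rule Fb_mono)
      have b: "Fb (x - q * h x) < (exp q + 1) * Fb x" using elim(1) Fx by (simp add: pos_divide_less_eq mult.commute)
      have c: "Fb x * (exp q + 1) < Fb 0" using elim(2) eq1 by (simp add: pos_less_divide_eq)
      show False using a b c by (simp add: mult.commute)
    qed
  qed
qed

lemma caseA_K:
  assumes ep: "upper_endpoint (distF M Mx) = \<infinity>" and gm: "gmda (distF M Mx) h"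
    and fl: "filterlim (\<lambda>y. y - c * h y) at_top at_top"
  shows "eventually (\<lambda>y. h (y - c * h y) \<le> 2 * h y) at_top"
proof -
  define z where "z y = y - c * h y" for y
  have fz: "filterlim z at_top at_top" using fl unfolding z_def .
  have t1: "((\<lambda>y. Fb (z y + h (z y)) / Fb (z y)) \<longlongrightarrow> exp (-1)) at_top"
    using filterlim_compose[OF gm_lim[OF ep gm, of 1] fz] by simp
  have t2: "((\<lambda>y. Fb (z y) / Fb y) \<longlongrightarrow> exp c) at_top"
    using gm_lim[OF ep gm, of "-c"] by (simp add: z_def)
  have t12: "((\<lambda>y. Fb (z y + h (z y)) / Fb y) \<longlongrightarrow> exp (-1) * exp c) at_top"
  proof -
    have eq: "(Fb (z y + h (z y)) / Fb (z y)) * (Fb (z y) / Fb y) = Fb (z y + h (z y)) / Fb y" for y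
      using endpoint_pos[OF ep, of "z y"] by simp
    show ?thesis using tendsto_mult[OF t1 t2] unfolding eq .
  qed
  have ee: "exp (-1) * exp c = exp (c - 1)" by (simp add: exp_add[symmetric])
  have t12': "((\<lambda>y. Fb (z y + h (z y)) / Fb y) \<longlongrightarrow> exp (c - 1)) at_top"
    using t12 unfolding ee .
  have t3: "((\<lambda>y. Fb (y + (2 - c) * h y) / Fb y) \<longlongrightarrow> exp (-(2-c))) at_top"
    by (rule gm_lim[OF ep gm])
  have lt: "exp (-(2-c)) < exp (c - 1)" by simp
  define m where "m = (exp (-(2-c)) + exp (c - 1)) / 2"
  have e1: "eventually (\<lambda>y. Fb (z y + h (z y)) / Fb y > m) at_top"
    by (rule order_tendstoD(1)[OF t12']) (use lt in \<open>simp add: m_def\<close>)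
  have e3: "eventually (\<lambda>y. Fb (y + (2-c) * h y) / Fb y < m) at_top"
    by (rule order_tendstoD(2)[OF t3]) (use lt in \<open>simp add: m_def\<close>)
  show ?thesis using e1 e3
  proof eventually_elim
    case (elim y)
    show ?case
    proof (rule ccontr)
      assume "\<not> h (y - c * h y) \<le> 2 * h y"
      then have "y + (2-c) * h y \<le> z y + h (z y)" unfolding z_def by (simp add: algebra_simps)
      then have "Fb (z y + h (z y)) \<le> Fb (y + (2-c) * h y)" by (rule Fb_mono)
      then have "Fb (z y + h (z y)) / Fb y \<le> Fb (y + (2-c) * h y) / Fb y"
        using endpoint_pos[OF ep, of y] by (simp add: divide_right_mono)
      then show False by (rule L_contra[OF elim(1) elim(2)])
    qed
  qed
qed

lemma caseA:
  assumes ep: "upper_endpoint (distF M Mx) = \<infinity>" and hp: "\<forall>x. h x > 0"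
    and gm: "gmda (distF M Mx) h" and star: "cond_star M n X h" and ss: "cond_starstar M n X h"
  shows "eventually (\<lambda>y. Fb y > 0) at_top" "eventually (\<lambda>y. h y \<ge> 0) at_top"
    "eventually (\<lambda>y. h y \<le> y) at_top"
    "\<forall>\<epsilon>>0. \<exists>t>0. eventually (\<lambda>y. Fb (y + t * h y) \<ge> (1-\<epsilon>) * Fb y) at_top"
    "\<forall>\<epsilon>>0. \<exists>t>0. eventually (\<lambda>y. Fb (y - t * h y) \<le> (1+\<epsilon>) * Fb y) at_top"
    "\<forall>E>0. \<forall>t>0. \<forall>\<epsilon>>0. eventually (\<lambda>y. pr (\<lambda>w. Mx w + E * mx w > y \<and> mx w > t * h y) \<le> \<epsilon> * Fb y) at_top"
proof -
  show pos: "eventually (\<lambda>y. Fb y > 0) at_top"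
    by (intro always_eventually allI endpoint_pos[OF ep])
  show "eventually (\<lambda>y. h y \<ge> 0) at_top"
    using hp by (intro always_eventually allI) (simp add: less_imp_le)
  show "eventually (\<lambda>y. h y \<le> y) at_top"
    using caseA_small[OF ep gm zero_less_one] by eventually_elim simp
  show "\<forall>\<epsilon>>0. \<exists>t>0. eventually (\<lambda>y. Fb (y + t * h y) \<ge> (1-\<epsilon>) * Fb y) at_top"
  proof (intro allI impI)
    fix \<epsilon> :: real assume e: "\<epsilon> > 0"
    have "exp (-(\<epsilon>/2)) \<ge> 1 + (-(\<epsilon>/2))" by (rule exp_ge_add_one_self)
    then have "exp (-(\<epsilon>/2)) > 1 - \<epsilon>" using e by simp
    then have "eventually (\<lambda>y. Fb (y + (\<epsilon>/2) * h y) \<ge> (1-\<epsilon>) * Fb y) at_top"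
      by (rule G_from[OF pos gm_lim[OF ep gm]])
    then show "\<exists>t>0. eventually (\<lambda>y. Fb (y + t * h y) \<ge> (1-\<epsilon>) * Fb y) at_top"
      using e by (intro exI[of _ "\<epsilon>/2"]) auto
  qed
  show "\<forall>\<epsilon>>0. \<exists>t>0. eventually (\<lambda>y. Fb (y - t * h y) \<le> (1+\<epsilon>) * Fb y) at_top"
  proof (intro allI impI)
    fix \<epsilon> :: real assume e: "\<epsilon> > 0"
    define t where "t = ln (1 + \<epsilon>/2)"
    have t: "t > 0" using e by (simp add: t_def)
    have et: "exp t = 1 + \<epsilon>/2" using e by (simp add: t_def)
    have lim: "((\<lambda>x. Fb (x - t * h x) / Fb x) \<longlongrightarrow> exp t) at_top" using gm_lim[OF ep gm, of "-t"] by simp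
    have "eventually (\<lambda>y. Fb (y - t * h y) \<le> (1+\<epsilon>) * Fb y) at_top"
      by (rule G'_from[OF pos lim]) (use et e in simp)
    then show "\<exists>t>0. eventually (\<lambda>y. Fb (y - t * h y) \<le> (1+\<epsilon>) * Fb y) at_top"
      using t by blast
  qed
  have fl: "\<forall>c>0. filterlim (\<lambda>y. y - c * h y) at_top at_top"
  proof (intro allI impI fl_lemma)
    fix c :: real assume c: "c > 0"
    have "eventually (\<lambda>y. h y < (1/(2*c)) * y) at_top" by (rule caseA_small[OF ep gm]) (use c in simp)
    then show "eventually (\<lambda>y. c * h y \<le> y / 2) at_top"
    proof eventually_elim
      case (elim y)
      have "c * h y \<le> c * ((1/(2*c)) * y)" using elim c by (intro mult_left_mono) auto
      then show ?case using c by simp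
    qed
  qed
  show "\<forall>E>0. \<forall>t>0. \<forall>\<epsilon>>0. eventually (\<lambda>y. pr (\<lambda>w. Mx w + E * mx w > y \<and> mx w > t * h y) \<le> \<epsilon> * Fb y) at_top"
  proof (rule allI, rule impI)
    fix E :: real assume E: "E > 0"
    show "\<forall>t>0. \<forall>\<epsilon>>0. eventually (\<lambda>y. pr (\<lambda>w. Mx w + E * mx w > y \<and> mx w > t * h y) \<le> \<epsilon> * Fb y) at_top"
    proof (rule remAB[OF star ss pos fl _ _ E])
      show "\<forall>c>0. \<exists>K>0. eventually (\<lambda>y. h (y - c * h y) \<le> K * h y) at_top"
        using caseA_K[OF ep gm] fl by (metis zero_less_numeral)
      show "\<forall>c>0. \<exists>C\<ge>0. eventually (\<lambda>y. Fb (y - c * h y) \<le> C * Fb y) at_top"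
      proof (intro allI impI)
        fix c :: real assume c: "c > 0"
        have lim: "((\<lambda>x. Fb (x - c * h x) / Fb x) \<longlongrightarrow> exp c) at_top" using gm_lim[OF ep gm, of "-c"] by simp
        have "eventually (\<lambda>y. Fb (y - c * h y) \<le> (1 + exp c) * Fb y) at_top"
          by (rule G'_from[OF pos lim]) simp
        then show "\<exists>C\<ge>0. eventually (\<lambda>y. Fb (y - c * h y) \<le> C * Fb y) at_top"
          by (intro exI[of _ "1 + exp c"]) (auto simp: add_nonneg_nonneg)
      qed
    qed
  qed
qed

end

theorem corollary3p1:
  fixes M :: "'a measure" and X :: "nat \<Rightarrow> 'a \<Rightarrow> real" and n :: nat
    and a b d :: real
  assumes "prob_space M"
    and "n \<ge> 2"
    and meas: "\<forall>i\<in>{1..n}. X i \<in> borel_measurable M"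
    and nonneg: "\<forall>i\<in>{1..n}. \<forall>\<omega>\<in>space M. X i \<omega> \<ge> 0"
    and nondegen: "\<forall>i\<in>{1..n}. measure M {\<omega> \<in> space M. X i \<omega> > 0} > 0"
    and cases:
      "(upper_endpoint (distF M (ordstat n X n)) = \<infinity> \<and>
         (\<exists>h. (\<forall>x. h x > 0) \<and> gmda (distF M (ordstat n X n)) h \<and>
              cond_star M n X h \<and> cond_starstar M n X h))
     \<or> (longtailed (distF M (ordstat n X n)) \<and>
         (\<exists>h\<in>Hclass (distF M (ordstat n X n)). cond_star M n X h \<and> cond_starstar M n X h))
     \<or> (longtailed (distF M (ordstat n X n)) \<and> domvar_dist (distF M (ordstat n X n)) \<and>
         (\<exists>h\<in>Hclass (distF M (ordstat n X n)). domvar h \<and> cond_star M n X h))"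
    and "0 < a" "a \<le> b" "0 \<le> d"
  shows "\<forall>\<epsilon>>0. eventually (\<lambda>x. \<forall>c. c 0 \<in> {a..b} \<and> (\<forall>i\<in>{1..n-1}. c i \<in> {-d..d}) \<longrightarrow>
            \<bar>measure M {\<omega> \<in> space M. (\<Sum>i=0..n-1. c i * ordstat n X (n - i) \<omega>) > x}
               / measure M {\<omega> \<in> space M. c 0 * ordstat n X n \<omega> > x} - 1\<bar> < \<epsilon> \<and>
            \<bar>measure M {\<omega> \<in> space M. c 0 * ordstat n X n \<omega> > x}
               / (\<Sum>i=1..n. measure M {\<omega> \<in> space M. c 0 * X i \<omega> > x}) - 1\<bar> < \<epsilon>) at_top"
proof -
  have osi: "os M X n" unfolding os_def os_axioms_def using assms(1-4) by auto
  interpret os M X n by (rule osi)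
  have ab: "0 < a" "a \<le> b" "0 \<le> d" using assms(7-9) by auto
  have thA: ?thesis if ep: "upper_endpoint (distF M (ordstat n X n)) = \<infinity>" and hp: "\<forall>x. h x > 0"
    and gm: "gmda (distF M (ordstat n X n)) h" and star: "cond_star M n X h" and ss: "cond_starstar M n X h" for h
  proof -
    note A = caseA[OF ep hp gm star ss]
    show ?thesis by (rule finish[OF A(1) A(3) star LB_all[OF star A(1) A(2) A(4)] UB_all[OF A(5) A(6)] ab])
  qed
  have thB: ?thesis if lt: "longtailed (distF M (ordstat n X n))" and hH: "h \<in> Hclass (distF M (ordstat n X n))"
    and star: "cond_star M n X h" and ss: "cond_starstar M n X h" for h
  proof -
    note H = hclass_hyps[OF lt hH]
    show ?thesis by (rule finish[OF H(1) H(3) star LB_all[OF star H(1) H(2) H(4)] UB_all[OF H(5) caseB[OF lt hH star ss]] ab])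
  qed
  have thC: ?thesis if lt: "longtailed (distF M (ordstat n X n))" and dd: "domvar_dist (distF M (ordstat n X n))"
    and hH: "h \<in> Hclass (distF M (ordstat n X n))" and dh: "domvar h" and star: "cond_star M n X h" for h
  proof -
    note H = hclass_hyps[OF lt hH]
    show ?thesis by (rule finish[OF H(1) H(3) star LB_all[OF star H(1) H(2) H(4)] UB_all[OF H(5) caseC[OF lt dd hH dh star]] ab])
  qed
  show ?thesis using cases thA thB thC by blast
qed

end
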